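(* Let $\mathsf E$ be a small preadditive category and $R=R_{\mathsf E}$ the associated ring. Then the category of c-unital left $R$-modules is naturally equivalent to the category of left $\mathsf E$-modules. The equivalence assigns to a left $\mathsf E$-module $\mathsf P$ the c-unital left $R$-module $P=\prod_{x\in\mathsf E}\mathsf P(x)$, with the action of $R$ on $P$ induced by the action of $\mathsf E$ on $\mathsf P$.
   Context: A small preadditive category is a small category enriched in abelian groups. Its associated ring is $R_{\mathsf E}=\bigoplus_{x,y\in\mathsf E}\mathrm{Hom}_{\mathsf E}(x,y)$, with multiplication given by composition of composable morphisms and zero product for noncomposable ones (a nonunital associative ring when $\mathsf E$ has infinitely many objects). A left $\mathsf E$-module is an additive covariant functor $\mathsf E\to\mathsf{Ab}$. Modules over $R$ are not assumed unital; a left $R$-module $P$ is c-unital if the natural map $P\to\mathrm{Hom}_R(R,P)$, $p\mapsto(r\mapsto rp)$, is an isomorphism. *)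

theory Defs
  imports "HOL-Algebra.Ring"
begin

text \<open>Objects are the elements of the type 'o
  (a set, hence small). H x y is the abelian group Hom(x,y) (only the carrier,
  addition and zero of the record are used). cmp x y z g f is the composite
  g o f of f : x -> y and g : y -> z; idn x is the identity of x.\<close>

definition preadditive_cat ::
  "('o \<Rightarrow> 'o \<Rightarrow> 'm ring) \<Rightarrow> ('o \<Rightarrow> 'o \<Rightarrow> 'o \<Rightarrow> 'm \<Rightarrow> 'm \<Rightarrow> 'm) \<Rightarrow> ('o \<Rightarrow> 'm) \<Rightarrow> bool" where
  "preadditive_cat H cmp idn \<longleftrightarrow>
     (\<forall>x y. abelian_group (H x y)) \<and>
     (\<forall>x. idn x \<in> carrier (H x x)) \<and>
     (\<forall>x y z f g. f \<in> carrier (H x y) \<longrightarrow> g \<in> carrier (H y z) \<longrightarrow>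
        cmp x y z g f \<in> carrier (H x z)) \<and>
     (\<forall>x y f. f \<in> carrier (H x y) \<longrightarrow> cmp x y y (idn y) f = f \<and> cmp x x y f (idn x) = f) \<and>
     (\<forall>w x y z f g h. f \<in> carrier (H w x) \<longrightarrow> g \<in> carrier (H x y) \<longrightarrow> h \<in> carrier (H y z) \<longrightarrow>
        cmp w y z h (cmp w x y g f) = cmp w x z (cmp x y z h g) f) \<and>
     (\<forall>x y z f g g'. f \<in> carrier (H x y) \<longrightarrow> g \<in> carrier (H y z) \<longrightarrow> g' \<in> carrier (H y z) \<longrightarrow>
        cmp x y z (g \<oplus>\<^bsub>H y z\<^esub> g') f = cmp x y z g f \<oplus>\<^bsub>H x z\<^esub> cmp x y z g' f) \<and>
     (\<forall>x y z f f' g. f \<in> carrier (H x y) \<longrightarrow> f' \<in> carrier (H x y) \<longrightarrow> g \<in> carrier (H y z) \<longrightarrow>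
        cmp x y z g (f \<oplus>\<^bsub>H x y\<^esub> f') = cmp x y z g f \<oplus>\<^bsub>H x z\<^esub> cmp x y z g f')"

text \<open>The ring R_E = direct sum of all Hom(x,y): an element r has component
  r x y in Hom(x,y), with finitely many nonzero components.\<close>

definition R_carrier :: "('o \<Rightarrow> 'o \<Rightarrow> 'm ring) \<Rightarrow> ('o \<Rightarrow> 'o \<Rightarrow> 'm) set" where
  "R_carrier H = {r. (\<forall>x y. r x y \<in> carrier (H x y)) \<and>
                     finite {(x, y). r x y \<noteq> \<zero>\<^bsub>H x y\<^esub>}}"

definition R_zero :: "('o \<Rightarrow> 'o \<Rightarrow> 'm ring) \<Rightarrow> 'o \<Rightarrow> 'o \<Rightarrow> 'm" where
  "R_zero H = (\<lambda>x y. \<zero>\<^bsub>H x y\<^esub>)"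

definition R_add :: "('o \<Rightarrow> 'o \<Rightarrow> 'm ring) \<Rightarrow> ('o \<Rightarrow> 'o \<Rightarrow> 'm) \<Rightarrow> ('o \<Rightarrow> 'o \<Rightarrow> 'm) \<Rightarrow> 'o \<Rightarrow> 'o \<Rightarrow> 'm" where
  "R_add H r s = (\<lambda>x y. r x y \<oplus>\<^bsub>H x y\<^esub> s x y)"

definition R_mult ::
  "('o \<Rightarrow> 'o \<Rightarrow> 'm ring) \<Rightarrow> ('o \<Rightarrow> 'o \<Rightarrow> 'o \<Rightarrow> 'm \<Rightarrow> 'm \<Rightarrow> 'm) \<Rightarrow>
   ('o \<Rightarrow> 'o \<Rightarrow> 'm) \<Rightarrow> ('o \<Rightarrow> 'o \<Rightarrow> 'm) \<Rightarrow> 'o \<Rightarrow> 'o \<Rightarrow> 'm" where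
  "R_mult H cmp r s = (\<lambda>x z. finsum (H x z) (\<lambda>y. cmp x y z (r y z) (s x y))
        {y. s x y \<noteq> \<zero>\<^bsub>H x y\<^esub> \<and> r y z \<noteq> \<zero>\<^bsub>H y z\<^esub>})"

definition R_self :: "('o \<Rightarrow> 'o \<Rightarrow> 'm ring) \<Rightarrow> ('o \<Rightarrow> 'o \<Rightarrow> 'o \<Rightarrow> 'm \<Rightarrow> 'm \<Rightarrow> 'm) \<Rightarrow> ('o \<Rightarrow> 'o \<Rightarrow> 'm) ring" where
  "R_self H cmp = \<lparr>carrier = R_carrier H, mult = R_mult H cmp, one = undefined,
                   zero = R_zero H, add = R_add H\<rparr>"

text \<open>A (not necessarily unital) left R-module: an abelian group M
  (carrier, add, zero of the record) with an action act.\<close>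
definition R_module ::
  "('o \<Rightarrow> 'o \<Rightarrow> 'm ring) \<Rightarrow> ('o \<Rightarrow> 'o \<Rightarrow> 'o \<Rightarrow> 'm \<Rightarrow> 'm \<Rightarrow> 'm) \<Rightarrow>
   'p ring \<Rightarrow> (('o \<Rightarrow> 'o \<Rightarrow> 'm) \<Rightarrow> 'p \<Rightarrow> 'p) \<Rightarrow> bool" where
  "R_module H cmp M act \<longleftrightarrow> abelian_group M \<and>
     (\<forall>r\<in>R_carrier H. \<forall>p\<in>carrier M. act r p \<in> carrier M) \<and>
     (\<forall>r\<in>R_carrier H. \<forall>p\<in>carrier M. \<forall>q\<in>carrier M.
        act r (p \<oplus>\<^bsub>M\<^esub> q) = act r p \<oplus>\<^bsub>M\<^esub> act r q) \<and>
     (\<forall>r\<in>R_carrier H. \<forall>s\<in>R_carrier H. \<forall>p\<in>carrier M.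
        act (R_add H r s) p = act r p \<oplus>\<^bsub>M\<^esub> act s p) \<and>
     (\<forall>r\<in>R_carrier H. \<forall>s\<in>R_carrier H. \<forall>p\<in>carrier M.
        act (R_mult H cmp r s) p = act r (act s p))"

definition R_hom ::
  "('o \<Rightarrow> 'o \<Rightarrow> 'm ring) \<Rightarrow> 'p ring \<Rightarrow> (('o \<Rightarrow> 'o \<Rightarrow> 'm) \<Rightarrow> 'p \<Rightarrow> 'p) \<Rightarrow>
   'q ring \<Rightarrow> (('o \<Rightarrow> 'o \<Rightarrow> 'm) \<Rightarrow> 'q \<Rightarrow> 'q) \<Rightarrow> ('p \<Rightarrow> 'q) set" where
  "R_hom H M act N act' = {\<phi>. \<phi> \<in> carrier M \<rightarrow>\<^sub>E carrier N \<and>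
     (\<forall>p\<in>carrier M. \<forall>q\<in>carrier M. \<phi> (p \<oplus>\<^bsub>M\<^esub> q) = \<phi> p \<oplus>\<^bsub>N\<^esub> \<phi> q) \<and>
     (\<forall>r\<in>R_carrier H. \<forall>p\<in>carrier M. \<phi> (act r p) = act' r (\<phi> p))}"

definition c_unital ::
  "('o \<Rightarrow> 'o \<Rightarrow> 'm ring) \<Rightarrow> ('o \<Rightarrow> 'o \<Rightarrow> 'o \<Rightarrow> 'm \<Rightarrow> 'm \<Rightarrow> 'm) \<Rightarrow>
   'p ring \<Rightarrow> (('o \<Rightarrow> 'o \<Rightarrow> 'm) \<Rightarrow> 'p \<Rightarrow> 'p) \<Rightarrow> bool" where
  "c_unital H cmp M act \<longleftrightarrow>
     bij_betw (\<lambda>p. \<lambda>r\<in>R_carrier H. act r p) (carrier M)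
              (R_hom H (R_self H cmp) (R_mult H cmp) M act)"

text \<open>A left E-module: an additive covariant functor E -> Ab. PM x is the
  abelian group P(x); pact x y f is P(f) : P(x) -> P(y) for f : x -> y.\<close>
definition E_module ::
  "('o \<Rightarrow> 'o \<Rightarrow> 'm ring) \<Rightarrow> ('o \<Rightarrow> 'o \<Rightarrow> 'o \<Rightarrow> 'm \<Rightarrow> 'm \<Rightarrow> 'm) \<Rightarrow> ('o \<Rightarrow> 'm) \<Rightarrow>
   ('o \<Rightarrow> 'v ring) \<Rightarrow> ('o \<Rightarrow> 'o \<Rightarrow> 'm \<Rightarrow> 'v \<Rightarrow> 'v) \<Rightarrow> bool" where
  "E_module H cmp idn PM pact \<longleftrightarrow>
     (\<forall>x. abelian_group (PM x)) \<and>
     (\<forall>x y f v. f \<in> carrier (H x y) \<longrightarrow> v \<in> carrier (PM x) \<longrightarrow> pact x y f v \<in> carrier (PM y)) \<and>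
     (\<forall>x y f v w. f \<in> carrier (H x y) \<longrightarrow> v \<in> carrier (PM x) \<longrightarrow> w \<in> carrier (PM x) \<longrightarrow>
        pact x y f (v \<oplus>\<^bsub>PM x\<^esub> w) = pact x y f v \<oplus>\<^bsub>PM y\<^esub> pact x y f w) \<and>
     (\<forall>x y f f' v. f \<in> carrier (H x y) \<longrightarrow> f' \<in> carrier (H x y) \<longrightarrow> v \<in> carrier (PM x) \<longrightarrow>
        pact x y (f \<oplus>\<^bsub>H x y\<^esub> f') v = pact x y f v \<oplus>\<^bsub>PM y\<^esub> pact x y f' v) \<and>
     (\<forall>x v. v \<in> carrier (PM x) \<longrightarrow> pact x x (idn x) v = v) \<and>
     (\<forall>x y z f g v. f \<in> carrier (H x y) \<longrightarrow> g \<in> carrier (H y z) \<longrightarrow> v \<in> carrier (PM x) \<longrightarrow>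
        pact x z (cmp x y z g f) v = pact y z g (pact x y f v))"

definition E_hom ::
  "('o \<Rightarrow> 'o \<Rightarrow> 'm ring) \<Rightarrow> ('o \<Rightarrow> 'v ring) \<Rightarrow> ('o \<Rightarrow> 'o \<Rightarrow> 'm \<Rightarrow> 'v \<Rightarrow> 'v) \<Rightarrow>
   ('o \<Rightarrow> 'w ring) \<Rightarrow> ('o \<Rightarrow> 'o \<Rightarrow> 'm \<Rightarrow> 'w \<Rightarrow> 'w) \<Rightarrow> ('o \<Rightarrow> 'v \<Rightarrow> 'w) set" where
  "E_hom H PM pact QM qact = {\<eta>.
     (\<forall>x. \<eta> x \<in> carrier (PM x) \<rightarrow>\<^sub>E carrier (QM x)) \<and>
     (\<forall>x. \<forall>v\<in>carrier (PM x). \<forall>w\<in>carrier (PM x).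
        \<eta> x (v \<oplus>\<^bsub>PM x\<^esub> w) = \<eta> x v \<oplus>\<^bsub>QM x\<^esub> \<eta> x w) \<and>
     (\<forall>x y f v. f \<in> carrier (H x y) \<longrightarrow> v \<in> carrier (PM x) \<longrightarrow>
        \<eta> y (pact x y f v) = qact x y f (\<eta> x v))}"

text \<open>The functor E-modules -> c-unital R-modules: P \<mapsto> prod_x P(x).\<close>
definition hat_carrier :: "('o \<Rightarrow> 'v ring) \<Rightarrow> ('o \<Rightarrow> 'v) set" where
  "hat_carrier PM = {u. \<forall>x. u x \<in> carrier (PM x)}"

definition hat_module :: "('o \<Rightarrow> 'v ring) \<Rightarrow> ('o \<Rightarrow> 'v) ring" where
  "hat_module PM = \<lparr>carrier = hat_carrier PM, mult = undefined, one = undefined,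
                    zero = (\<lambda>x. \<zero>\<^bsub>PM x\<^esub>), add = (\<lambda>u v x. u x \<oplus>\<^bsub>PM x\<^esub> v x)\<rparr>"

definition hat_act ::
  "('o \<Rightarrow> 'o \<Rightarrow> 'm ring) \<Rightarrow> ('o \<Rightarrow> 'v ring) \<Rightarrow> ('o \<Rightarrow> 'o \<Rightarrow> 'm \<Rightarrow> 'v \<Rightarrow> 'v) \<Rightarrow>
   ('o \<Rightarrow> 'o \<Rightarrow> 'm) \<Rightarrow> ('o \<Rightarrow> 'v) \<Rightarrow> ('o \<Rightarrow> 'v)" where
  "hat_act H PM pact r u = (\<lambda>y. finsum (PM y) (\<lambda>x. pact x y (r x y) (u x))
                                    {x. r x y \<noteq> \<zero>\<^bsub>H x y\<^esub>})"

definition hat_hom :: "('o \<Rightarrow> 'v ring) \<Rightarrow> ('o \<Rightarrow> 'v \<Rightarrow> 'w) \<Rightarrow> ('o \<Rightarrow> 'v) \<Rightarrow> ('o \<Rightarrow> 'w)" where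
  "hat_hom PM \<eta> = (\<lambda>u\<in>hat_carrier PM. \<lambda>x. \<eta> x (u x))"

end

theory Submission
  imports Defs
begin


lemma ab_idem_zero:
  fixes G (structure)
  assumes "abelian_group G" "a \<in> carrier G" "a \<oplus>\<^bsub>G\<^esub> a = a"
  shows "a = \<zero>\<^bsub>G\<^esub>"
proof -
  interpret abelian_group G by fact
  show ?thesis using assms(2,3) add.l_cancel_one by blast
qed

lemma finsum_single:
  assumes "abelian_monoid G" "f a \<in> carrier G"
  shows "finsum G f {a} = f a"
proof -
  interpret abelian_monoid G by fact
  show ?thesis using finsum_insert[of "{}" a f] assms(2) by simp
qed

locale pcat =
  fixes H :: "'o \<Rightarrow> 'o \<Rightarrow> 'm ring" and cmp :: "'o \<Rightarrow> 'o \<Rightarrow> 'o \<Rightarrow> 'm \<Rightarrow> 'm \<Rightarrow> 'm"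
    and idn :: "'o \<Rightarrow> 'm"
  assumes pc: "preadditive_cat H cmp idn"
begin

lemma Hab: "abelian_group (H x y)" using pc unfolding preadditive_cat_def by auto
lemma idn_carr: "idn x \<in> carrier (H x x)" using pc unfolding preadditive_cat_def by auto
lemma cmp_carr: "f \<in> carrier (H x y) \<Longrightarrow> g \<in> carrier (H y z) \<Longrightarrow> cmp x y z g f \<in> carrier (H x z)"
  using pc unfolding preadditive_cat_def by auto
lemma cmp_idl: "f \<in> carrier (H x y) \<Longrightarrow> cmp x y y (idn y) f = f"
  using pc unfolding preadditive_cat_def by auto
lemma cmp_idr: "f \<in> carrier (H x y) \<Longrightarrow> cmp x x y f (idn x) = f"
  using pc unfolding preadditive_cat_def by auto
lemma cmp_assoc: "f \<in> carrier (H w x) \<Longrightarrow> g \<in> carrier (H x y) \<Longrightarrow> h \<in> carrier (H y z) \<Longrightarrow>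
        cmp w y z h (cmp w x y g f) = cmp w x z (cmp x y z h g) f"
  using pc unfolding preadditive_cat_def by auto
lemma cmp_addl: "f \<in> carrier (H x y) \<Longrightarrow> g \<in> carrier (H y z) \<Longrightarrow> g' \<in> carrier (H y z) \<Longrightarrow>
        cmp x y z (g \<oplus>\<^bsub>H y z\<^esub> g') f = cmp x y z g f \<oplus>\<^bsub>H x z\<^esub> cmp x y z g' f"
  using pc unfolding preadditive_cat_def by auto
lemma cmp_addr: "f \<in> carrier (H x y) \<Longrightarrow> f' \<in> carrier (H x y) \<Longrightarrow> g \<in> carrier (H y z) \<Longrightarrow>
        cmp x y z g (f \<oplus>\<^bsub>H x y\<^esub> f') = cmp x y z g f \<oplus>\<^bsub>H x z\<^esub> cmp x y z g f'"
  using pc unfolding preadditive_cat_def by auto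

lemma Ham: "abelian_monoid (H x y)" using Hab abelian_group.axioms(1) by blast
lemma zero_H[simp]: "\<zero>\<^bsub>H x y\<^esub> \<in> carrier (H x y)"
  using abelian_monoid.zero_closed[OF Ham] by blast
lemma H_lz[simp]: "f \<in> carrier (H x y) \<Longrightarrow> \<zero>\<^bsub>H x y\<^esub> \<oplus>\<^bsub>H x y\<^esub> f = f"
  using abelian_monoid.l_zero[OF Ham] by blast
lemma H_rz[simp]: "f \<in> carrier (H x y) \<Longrightarrow> f \<oplus>\<^bsub>H x y\<^esub> \<zero>\<^bsub>H x y\<^esub> = f"
  using abelian_monoid.r_zero[OF Ham] by blast
lemma H_cl[simp]: "f \<in> carrier (H x y) \<Longrightarrow> g \<in> carrier (H x y) \<Longrightarrow> f \<oplus>\<^bsub>H x y\<^esub> g \<in> carrier (H x y)"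
  using abelian_monoid.a_closed[OF Ham] by blast

lemma cmp_zl: "f \<in> carrier (H x y) \<Longrightarrow> cmp x y z \<zero>\<^bsub>H y z\<^esub> f = \<zero>\<^bsub>H x z\<^esub>"
  by (rule ab_idem_zero[OF Hab]) (auto simp: cmp_carr cmp_addl[symmetric] H_lz)
lemma cmp_zr: "g \<in> carrier (H y z) \<Longrightarrow> cmp x y z g \<zero>\<^bsub>H x y\<^esub> = \<zero>\<^bsub>H x z\<^esub>"
  by (rule ab_idem_zero[OF Hab]) (auto simp: cmp_carr cmp_addr[symmetric] H_lz)

definition single :: "'o \<Rightarrow> 'o \<Rightarrow> 'm \<Rightarrow> 'o \<Rightarrow> 'o \<Rightarrow> 'm" where
  "single x y f = (\<lambda>a b. if a = x \<and> b = y then f else \<zero>\<^bsub>H a b\<^esub>)"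
definition supp :: "('o \<Rightarrow> 'o \<Rightarrow> 'm) \<Rightarrow> ('o \<times> 'o) set" where
  "supp r = {(x, y). r x y \<noteq> \<zero>\<^bsub>H x y\<^esub>}"
definition e :: "'o \<Rightarrow> 'o \<Rightarrow> 'o \<Rightarrow> 'm" where
  "e x = single x x (idn x)"

lemma Rc_iff: "r \<in> R_carrier H \<longleftrightarrow> (\<forall>x y. r x y \<in> carrier (H x y)) \<and> finite (supp r)"
  unfolding R_carrier_def supp_def by simp

lemma Rc_comp: "r \<in> R_carrier H \<Longrightarrow> r x y \<in> carrier (H x y)"
  unfolding Rc_iff by blast
lemma Rc_fin: "r \<in> R_carrier H \<Longrightarrow> finite (supp r)"
  unfolding Rc_iff by blast
lemma Rc_fin_src: "r \<in> R_carrier H \<Longrightarrow> finite {x. r x y \<noteq> \<zero>\<^bsub>H x y\<^esub>}"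
proof -
  assume "r \<in> R_carrier H"
  then have "finite (fst ` supp r)" using Rc_fin by blast
  moreover have "{x. r x y \<noteq> \<zero>\<^bsub>H x y\<^esub>} \<subseteq> fst ` supp r" unfolding supp_def by force
  ultimately show ?thesis using finite_subset by blast
qed

lemma single_carr: "f \<in> carrier (H x y) \<Longrightarrow> single x y f \<in> R_carrier H"
  unfolding Rc_iff
proof
  assume "f \<in> carrier (H x y)"
  then show "\<forall>a b. single x y f a b \<in> carrier (H a b)" by (auto simp: single_def)
  have "supp (single x y f) \<subseteq> {(x, y)}" by (auto simp: supp_def single_def split: if_splits)
  then show "finite (supp (single x y f))" using finite_subset by blast
qed

lemma e_carr: "e x \<in> R_carrier H" unfolding e_def by (rule single_carr[OF idn_carr])

lemma single_zero: "single a b \<zero>\<^bsub>H a b\<^esub> = R_zero H"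
  by (rule ext)+ (auto simp: single_def R_zero_def)

lemma R_zero_carr: "R_zero H \<in> R_carrier H"
  using single_carr[OF zero_H] single_zero by metis

lemma R_add_carr: "r \<in> R_carrier H \<Longrightarrow> s \<in> R_carrier H \<Longrightarrow> R_add H r s \<in> R_carrier H"
  unfolding Rc_iff
proof (intro conjI allI)
  fix x y assume a: "(\<forall>x y. r x y \<in> carrier (H x y)) \<and> finite (supp r)" "(\<forall>x y. s x y \<in> carrier (H x y)) \<and> finite (supp s)"
  then show "R_add H r s x y \<in> carrier (H x y)" by (simp add: R_add_def H_cl)
  have "supp (R_add H r s) \<subseteq> supp r \<union> supp s"
    using a by (auto simp: supp_def R_add_def H_lz)
  then show "finite (supp (R_add H r s))" using a finite_subset by blast
qed


lemma R_mult_eq: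
  assumes "\<forall>y. r y z \<in> carrier (H y z)" "\<forall>y. s x y \<in> carrier (H x y)" "finite F"
    "{y. s x y \<noteq> \<zero>\<^bsub>H x y\<^esub> \<and> r y z \<noteq> \<zero>\<^bsub>H y z\<^esub>} \<subseteq> F"
  shows "R_mult H cmp r s x z = finsum (H x z) (\<lambda>y. cmp x y z (r y z) (s x y)) F"
proof -
  interpret Hxz: abelian_monoid "H x z" by (rule Ham)
  have "R_mult H cmp r s x z = finsum (H x z) (\<lambda>y. cmp x y z (r y z) (s x y))
     {y. s x y \<noteq> \<zero>\<^bsub>H x y\<^esub> \<and> r y z \<noteq> \<zero>\<^bsub>H y z\<^esub>}" by (simp add: R_mult_def)
  also have "\<dots> = finsum (H x z) (\<lambda>y. cmp x y z (r y z) (s x y)) F"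
    apply (rule Hxz.add.finprod_mono_neutral_cong_left)
    using assms by (auto simp: cmp_zl cmp_zr cmp_carr)
  finally show ?thesis .
qed

lemma R_mult_carr: assumes "r \<in> R_carrier H" "s \<in> R_carrier H"
  shows "R_mult H cmp r s \<in> R_carrier H"
  unfolding Rc_iff
proof (intro conjI allI)
  fix x z
  interpret Hxz: abelian_monoid "H x z" by (rule Ham)
  show "R_mult H cmp r s x z \<in> carrier (H x z)"
    unfolding R_mult_def using assms by (auto intro!: Hxz.finsum_closed simp: Rc_comp cmp_carr)
next
  have "supp (R_mult H cmp r s) \<subseteq> fst ` supp s \<times> snd ` supp r"
  proof
    fix p assume "p \<in> supp (R_mult H cmp r s)"
    then obtain x z where p: "p = (x, z)" and nz: "R_mult H cmp r s x z \<noteq> \<zero>\<^bsub>H x z\<^esub>"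
      unfolding supp_def by auto
    have "{y. s x y \<noteq> \<zero>\<^bsub>H x y\<^esub> \<and> r y z \<noteq> \<zero>\<^bsub>H y z\<^esub>} \<noteq> {}"
    proof
      assume "{y. s x y \<noteq> \<zero>\<^bsub>H x y\<^esub> \<and> r y z \<noteq> \<zero>\<^bsub>H y z\<^esub>} = {}"
      then have "R_mult H cmp r s x z = finsum (H x z) (\<lambda>y. cmp x y z (r y z) (s x y)) {}"
        unfolding R_mult_def by (simp only:)
      then have "R_mult H cmp r s x z = \<zero>\<^bsub>H x z\<^esub>"
        using abelian_monoid.finsum_empty[OF Ham] by simp
      with nz show False by simp
    qed
    then obtain y where "s x y \<noteq> \<zero>\<^bsub>H x y\<^esub>" "r y z \<noteq> \<zero>\<^bsub>H y z\<^esub>" by auto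
    then have "(x, y) \<in> supp s" "(y, z) \<in> supp r" unfolding supp_def by auto
    then show "p \<in> fst ` supp s \<times> snd ` supp r" using p by force
  qed
  then show "finite (supp (R_mult H cmp r s))"
    using Rc_fin[OF assms(1)] Rc_fin[OF assms(2)] finite_subset by blast
qed

lemma R_mult_addl: assumes "r \<in> R_carrier H" "r' \<in> R_carrier H" "s \<in> R_carrier H"
  shows "R_mult H cmp (R_add H r r') s = R_add H (R_mult H cmp r s) (R_mult H cmp r' s)"
proof (rule ext, rule ext)
  fix x z
  interpret Hxz: abelian_monoid "H x z" by (rule Ham)
  define F where "F = snd ` supp s"
  have fF: "finite F" unfolding F_def using Rc_fin[OF assms(3)] by blast
  have sub: "{y. s x y \<noteq> \<zero>\<^bsub>H x y\<^esub> \<and> q y z \<noteq> \<zero>\<^bsub>H y z\<^esub>} \<subseteq> F" for q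
    unfolding F_def supp_def by force
  have ra: "R_add H r r' \<in> R_carrier H" using R_add_carr assms by blast
  show "R_mult H cmp (R_add H r r') s x z = R_add H (R_mult H cmp r s) (R_mult H cmp r' s) x z"
    unfolding R_add_def[of H "R_mult H cmp r s"]
    apply (subst R_mult_eq[where r="R_add H r r'" and s=s and x=x and z=z and F=F, OF _ _ fF sub[of "R_add H r r'"]], use ra assms in \<open>simp_all add: Rc_comp\<close>)
    apply (subst R_mult_eq[where r="r" and s=s and x=x and z=z and F=F, OF _ _ fF sub[of "r"]], use ra assms in \<open>simp_all add: Rc_comp\<close>)
    apply (subst R_mult_eq[where r="r'" and s=s and x=x and z=z and F=F, OF _ _ fF sub[of "r'"]], use ra assms in \<open>simp_all add: Rc_comp\<close>)
    apply (simp add: R_add_def cmp_addl Rc_comp)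
    apply (rule Hxz.finsum_addf)
    using assms by (auto simp: Rc_comp cmp_carr)
qed

lemma R_mult_addr: assumes "r \<in> R_carrier H" "s \<in> R_carrier H" "s' \<in> R_carrier H"
  shows "R_mult H cmp r (R_add H s s') = R_add H (R_mult H cmp r s) (R_mult H cmp r s')"
proof (rule ext, rule ext)
  fix x z
  interpret Hxz: abelian_monoid "H x z" by (rule Ham)
  define F where "F = fst ` supp r"
  have fF: "finite F" unfolding F_def using Rc_fin[OF assms(1)] by blast
  have sub: "{y. q x y \<noteq> \<zero>\<^bsub>H x y\<^esub> \<and> r y z \<noteq> \<zero>\<^bsub>H y z\<^esub>} \<subseteq> F" for q
    unfolding F_def supp_def by force
  have sa: "R_add H s s' \<in> R_carrier H" using R_add_carr assms by blast
  show "R_mult H cmp r (R_add H s s') x z = R_add H (R_mult H cmp r s) (R_mult H cmp r s') x z"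
    unfolding R_add_def[of H "R_mult H cmp r s"]
    apply (subst R_mult_eq[where r=r and s="R_add H s s'" and x=x and z=z and F=F, OF _ _ fF sub[of "R_add H s s'"]], use sa assms in \<open>simp_all add: Rc_comp\<close>)
    apply (subst R_mult_eq[where r=r and s="s" and x=x and z=z and F=F, OF _ _ fF sub[of "s"]], use sa assms in \<open>simp_all add: Rc_comp\<close>)
    apply (subst R_mult_eq[where r=r and s="s'" and x=x and z=z and F=F, OF _ _ fF sub[of "s'"]], use sa assms in \<open>simp_all add: Rc_comp\<close>)
    apply (simp add: R_add_def cmp_addr Rc_comp)
    apply (rule Hxz.finsum_addf)
    using assms by (auto simp: Rc_comp cmp_carr)
qed

lemma single_mult: assumes "f \<in> carrier (H x y)" "g \<in> carrier (H y' z)"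
  shows "R_mult H cmp (single y' z g) (single x y f) =
    (if y = y' then single x z (cmp x y z g f) else R_zero H)"
proof (rule ext, rule ext)
  fix a c
  define F where "F = {b. b = y \<and> b = y' \<and> a = x \<and> c = z}"
  have fF: "finite F" unfolding F_def by (rule finite_subset[of _ "{y}"]) auto
  have sub: "{b. single x y f a b \<noteq> \<zero>\<^bsub>H a b\<^esub> \<and> single y' z g b c \<noteq> \<zero>\<^bsub>H b c\<^esub>} \<subseteq> F"
    unfolding F_def single_def by (auto split: if_splits)
  have c1: "\<forall>b. single y' z g b c \<in> carrier (H b c)" "\<forall>b. single x y f a b \<in> carrier (H a b)"
    using assms by (auto simp: single_def)
  show "R_mult H cmp (single y' z g) (single x y f) a c =
    (if y = y' then single x z (cmp x y z g f) else R_zero H) a c"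
  proof (cases "y = y' \<and> a = x \<and> c = z")
    case True
    then have "F = {y}" unfolding F_def by auto
    then show ?thesis
      apply (subst R_mult_eq[where r="single y' z g" and s="single x y f" and x=a and z=c and F=F, OF c1 fF sub])
      apply (simp only: \<open>F = {y}\<close>)
      apply (subst finsum_single[OF Ham])
      using True assms by (auto simp: single_def cmp_carr)
  next
    case False
    then have "F = {}" unfolding F_def by auto
    then show ?thesis
      apply (subst R_mult_eq[where r="single y' z g" and s="single x y f" and x=a and z=c and F=F, OF c1 fF sub])
      using False abelian_monoid.finsum_empty[OF Ham]
      by (auto simp: single_def R_zero_def)
  qed
qed

lemma R_induct:
  assumes a1: "\<And>r s. r \<in> R_carrier H \<Longrightarrow> s \<in> R_carrier H \<Longrightarrow> Fa (R_add H r s) = pl (Fa r) (Fa s)"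
    and a2: "\<And>r s. r \<in> R_carrier H \<Longrightarrow> s \<in> R_carrier H \<Longrightarrow> Fb (R_add H r s) = pl (Fb r) (Fb s)"
    and a3: "\<And>x y f. f \<in> carrier (H x y) \<Longrightarrow> Fa (single x y f) = Fb (single x y f)"
    and r: "r \<in> R_carrier H"
  shows "Fa r = Fb r"
proof -
  have "\<forall>r. r \<in> R_carrier H \<longrightarrow> supp r \<subseteq> S \<longrightarrow> Fa r = Fb r" if "finite S" for S
    using that
  proof (induction S)
    case empty
    show ?case
    proof (intro allI impI)
      fix r assume "r \<in> R_carrier H" "supp r \<subseteq> {}"
      then have "r = R_zero H" unfolding supp_def R_zero_def by (intro ext) auto
      then have "r = single undefined undefined \<zero>\<^bsub>H undefined undefined\<^esub>" using single_zero by simp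
      then show "Fa r = Fb r" using a3[OF zero_H] by simp
    qed
  next
    case (insert p S)
    show ?case
    proof (intro allI impI)
      fix r assume r: "r \<in> R_carrier H" and sr: "supp r \<subseteq> insert p S"
      obtain a b where p: "p = (a, b)" by force
      define r' where "r' = (\<lambda>x y. if x = a \<and> y = b then \<zero>\<^bsub>H x y\<^esub> else r x y)"
      have sr': "supp r' \<subseteq> supp r" "supp r' \<subseteq> S" using sr p unfolding r'_def supp_def by auto
      have r'c: "r' \<in> R_carrier H" unfolding Rc_iff using sr'(1) Rc_fin[OF r] Rc_comp[OF r]
        by (auto simp: r'_def intro: finite_subset)
      have sc: "single a b (r a b) \<in> R_carrier H" using single_carr Rc_comp[OF r] by blast
      have req: "r = R_add H (single a b (r a b)) r'"
        unfolding R_add_def single_def r'_def using Rc_comp[OF r] by (intro ext) auto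
      have "Fa r = pl (Fa (single a b (r a b))) (Fa r')" using a1[OF sc r'c] req by simp
      also have "\<dots> = pl (Fb (single a b (r a b))) (Fb r')"
        using a3[OF Rc_comp[OF r]] insert.IH r'c sr'(2) by simp
      also have "\<dots> = Fb r" using a2[OF sc r'c] req by simp
      finally show "Fa r = Fb r" .
    qed
  qed
  then show ?thesis using r Rc_fin by blast
qed


lemma R_self_carrier[simp]: "carrier (R_self H cmp) = R_carrier H" by (simp add: R_self_def)
lemma R_self_add[simp]: "a \<oplus>\<^bsub>R_self H cmp\<^esub> b = R_add H a b" by (simp add: R_self_def)

lemma e_mult_single: "f \<in> carrier (H x y) \<Longrightarrow> R_mult H cmp (single x y f) (e x) = single x y f"
  unfolding e_def using single_mult[OF idn_carr, of f x y] cmp_idr by simp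
lemma single_mult_e: "f \<in> carrier (H x y) \<Longrightarrow> R_mult H cmp (e y) (single x y f) = single x y f"
  unfolding e_def using single_mult[of f x y "idn y" y y] idn_carr cmp_idl by simp

end

lemma hat_carrier_simp[simp]: "carrier (hat_module PM) = hat_carrier PM" by (simp add: hat_module_def)
lemma hat_add_simp[simp]: "u \<oplus>\<^bsub>hat_module PM\<^esub> v = (\<lambda>x. u x \<oplus>\<^bsub>PM x\<^esub> v x)" by (simp add: hat_module_def)
lemma hat_zero_simp[simp]: "\<zero>\<^bsub>hat_module PM\<^esub> = (\<lambda>x. \<zero>\<^bsub>PM x\<^esub>)" by (simp add: hat_module_def)
lemma hat_carrierI: "(\<And>x. u x \<in> carrier (PM x)) \<Longrightarrow> u \<in> hat_carrier PM" by (simp add: hat_carrier_def)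
lemma hat_carrierD: "u \<in> hat_carrier PM \<Longrightarrow> u x \<in> carrier (PM x)" by (simp add: hat_carrier_def)

lemma hat_ab: assumes "\<And>x. abelian_group (PM x)" shows "abelian_group (hat_module PM)"
proof (rule abelian_groupI)
  fix u v w assume "u \<in> carrier (hat_module PM)" "v \<in> carrier (hat_module PM)" "w \<in> carrier (hat_module PM)"
  then have c: "\<And>x. u x \<in> carrier (PM x)" "\<And>x. v x \<in> carrier (PM x)" "\<And>x. w x \<in> carrier (PM x)"
    by (auto simp: hat_carrier_def)
  show "u \<oplus>\<^bsub>hat_module PM\<^esub> v \<in> carrier (hat_module PM)"
    using c abelian_monoid.a_closed[OF abelian_group.axioms(1)[OF assms]] by (auto simp: hat_carrier_def)
  show "u \<oplus>\<^bsub>hat_module PM\<^esub> v \<oplus>\<^bsub>hat_module PM\<^esub> w = u \<oplus>\<^bsub>hat_module PM\<^esub> (v \<oplus>\<^bsub>hat_module PM\<^esub> w)"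
    using c abelian_monoid.a_assoc[OF abelian_group.axioms(1)[OF assms]] by auto
  show "u \<oplus>\<^bsub>hat_module PM\<^esub> v = v \<oplus>\<^bsub>hat_module PM\<^esub> u"
    using c abelian_monoid.a_comm[OF abelian_group.axioms(1)[OF assms]] by auto
  show "\<zero>\<^bsub>hat_module PM\<^esub> \<oplus>\<^bsub>hat_module PM\<^esub> u = u"
    using c abelian_monoid.l_zero[OF abelian_group.axioms(1)[OF assms]] by auto
  show "\<exists>y\<in>carrier (hat_module PM). y \<oplus>\<^bsub>hat_module PM\<^esub> u = \<zero>\<^bsub>hat_module PM\<^esub>"
    apply (rule bexI[of _ "\<lambda>x. \<ominus>\<^bsub>PM x\<^esub> u x"])
    using c abelian_group.l_neg[OF assms] abelian_group.a_inv_closed[OF assms]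
    by (auto simp: hat_carrier_def)
next
  show "\<zero>\<^bsub>hat_module PM\<^esub> \<in> carrier (hat_module PM)"
    using abelian_monoid.zero_closed[OF abelian_group.axioms(1)[OF assms]] by (auto simp: hat_carrier_def)
qed

locale emod = pcat H cmp idn
  for H :: "'o \<Rightarrow> 'o \<Rightarrow> 'm ring" and cmp idn +
  fixes PM :: "'o \<Rightarrow> 'v ring" and pact :: "'o \<Rightarrow> 'o \<Rightarrow> 'm \<Rightarrow> 'v \<Rightarrow> 'v"
  assumes em: "E_module H cmp idn PM pact"
begin

lemma PMab: "abelian_group (PM x)" using em unfolding E_module_def by auto
lemma PMam: "abelian_monoid (PM x)" using PMab abelian_group.axioms(1) by blast
lemma PM_zero[simp]: "\<zero>\<^bsub>PM x\<^esub> \<in> carrier (PM x)" using abelian_monoid.zero_closed[OF PMam] by blast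
lemma PM_lz[simp]: "v \<in> carrier (PM x) \<Longrightarrow> \<zero>\<^bsub>PM x\<^esub> \<oplus>\<^bsub>PM x\<^esub> v = v"
  using abelian_monoid.l_zero[OF PMam] by blast
lemma PM_rz[simp]: "v \<in> carrier (PM x) \<Longrightarrow> v \<oplus>\<^bsub>PM x\<^esub> \<zero>\<^bsub>PM x\<^esub> = v"
  using abelian_monoid.r_zero[OF PMam] by blast
lemma PM_cl[simp]: "v \<in> carrier (PM x) \<Longrightarrow> w \<in> carrier (PM x) \<Longrightarrow> v \<oplus>\<^bsub>PM x\<^esub> w \<in> carrier (PM x)"
  using abelian_monoid.a_closed[OF PMam] by blast
lemma pact_carr: "f \<in> carrier (H x y) \<Longrightarrow> v \<in> carrier (PM x) \<Longrightarrow> pact x y f v \<in> carrier (PM y)"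
  using em unfolding E_module_def by auto
lemma pact_addv: "f \<in> carrier (H x y) \<Longrightarrow> v \<in> carrier (PM x) \<Longrightarrow> w \<in> carrier (PM x) \<Longrightarrow>
        pact x y f (v \<oplus>\<^bsub>PM x\<^esub> w) = pact x y f v \<oplus>\<^bsub>PM y\<^esub> pact x y f w"
  using em unfolding E_module_def by auto
lemma pact_addf: "f \<in> carrier (H x y) \<Longrightarrow> f' \<in> carrier (H x y) \<Longrightarrow> v \<in> carrier (PM x) \<Longrightarrow>
        pact x y (f \<oplus>\<^bsub>H x y\<^esub> f') v = pact x y f v \<oplus>\<^bsub>PM y\<^esub> pact x y f' v"
  using em unfolding E_module_def by auto
lemma pact_idn: "v \<in> carrier (PM x) \<Longrightarrow> pact x x (idn x) v = v"
  using em unfolding E_module_def by auto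
lemma pact_cmp: "f \<in> carrier (H x y) \<Longrightarrow> g \<in> carrier (H y z) \<Longrightarrow> v \<in> carrier (PM x) \<Longrightarrow>
        pact x z (cmp x y z g f) v = pact y z g (pact x y f v)"
  using em unfolding E_module_def by auto
lemma pact_zf: "v \<in> carrier (PM x) \<Longrightarrow> pact x y \<zero>\<^bsub>H x y\<^esub> v = \<zero>\<^bsub>PM y\<^esub>"
  by (rule ab_idem_zero[OF PMab]) (auto simp: pact_carr pact_addf[symmetric])
lemma pact_zv: "f \<in> carrier (H x y) \<Longrightarrow> pact x y f \<zero>\<^bsub>PM x\<^esub> = \<zero>\<^bsub>PM y\<^esub>"
  by (rule ab_idem_zero[OF PMab]) (auto simp: pact_carr pact_addv[symmetric])

lemma hatab: "abelian_group (hat_module PM)" by (rule hat_ab[OF PMab])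

lemma hat_act_eq:
  assumes "\<forall>x. r x y \<in> carrier (H x y)" "u \<in> hat_carrier PM" "finite F"
    "{x. r x y \<noteq> \<zero>\<^bsub>H x y\<^esub>} \<subseteq> F"
  shows "hat_act H PM pact r u y = finsum (PM y) (\<lambda>x. pact x y (r x y) (u x)) F"
proof -
  interpret P: abelian_monoid "PM y" by (rule PMam)
  show ?thesis unfolding hat_act_def
    apply (rule P.add.finprod_mono_neutral_cong_left)
    using assms by (auto simp: pact_zf pact_carr hat_carrierD)
qed

lemma hat_act_carr: "r \<in> R_carrier H \<Longrightarrow> u \<in> hat_carrier PM \<Longrightarrow> hat_act H PM pact r u \<in> hat_carrier PM"
  unfolding hat_act_def
  by (rule hat_carrierI, rule abelian_monoid.finsum_closed[OF PMam])
     (auto simp: pact_carr hat_carrierD Rc_comp)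

lemma hat_act_single: assumes "f \<in> carrier (H x y)" "u \<in> hat_carrier PM"
  shows "hat_act H PM pact (single x y f) u = (\<lambda>b. if b = y then pact x y f (u x) else \<zero>\<^bsub>PM b\<^esub>)"
proof
  fix b
  define F where "F = {a. a = x \<and> b = y}"
  have fF: "finite F" unfolding F_def by (rule finite_subset[of _ "{x}"]) auto
  have sub: "{a. single x y f a b \<noteq> \<zero>\<^bsub>H a b\<^esub>} \<subseteq> F" unfolding F_def single_def by auto
  have c: "\<forall>a. single x y f a b \<in> carrier (H a b)" using assms by (auto simp: single_def)
  show "hat_act H PM pact (single x y f) u b = (if b = y then pact x y f (u x) else \<zero>\<^bsub>PM b\<^esub>)"
  proof (cases "b = y")
    case True
    then have "F = {x}" unfolding F_def by auto
    then show ?thesis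
      apply (subst hat_act_eq[where r="single x y f" and y=b and u=u and F=F, OF c assms(2) fF sub])
      apply (simp only: \<open>F = {x}\<close>)
      apply (subst finsum_single[OF PMam])
      using True assms by (auto simp: single_def pact_carr hat_carrierD)
  next
    case False
    then have "F = {}" unfolding F_def by auto
    then show ?thesis
      apply (subst hat_act_eq[where r="single x y f" and y=b and u=u and F=F, OF c assms(2) fF sub])
      using False abelian_monoid.finsum_empty[OF PMam] by simp
  qed
qed

lemma hat_act_e: "u \<in> hat_carrier PM \<Longrightarrow> hat_act H PM pact (e x) u = (\<lambda>b. if b = x then u x else \<zero>\<^bsub>PM b\<^esub>)"
proof -
  assume u: "u \<in> hat_carrier PM"
  have eq: "pact x x (idn x) (u x) = u x" using pact_idn hat_carrierD[OF u] by blast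
  show ?thesis unfolding e_def hat_act_single[OF idn_carr u] by (simp only: eq)
qed

lemma hat_act_addp: assumes "r \<in> R_carrier H" "u \<in> hat_carrier PM" "v \<in> hat_carrier PM"
  shows "hat_act H PM pact r (\<lambda>x. u x \<oplus>\<^bsub>PM x\<^esub> v x) =
     (\<lambda>y. hat_act H PM pact r u y \<oplus>\<^bsub>PM y\<^esub> hat_act H PM pact r v y)"
proof
  fix y
  interpret P: abelian_monoid "PM y" by (rule PMam)
  show "hat_act H PM pact r (\<lambda>x. u x \<oplus>\<^bsub>PM x\<^esub> v x) y =
     hat_act H PM pact r u y \<oplus>\<^bsub>PM y\<^esub> hat_act H PM pact r v y"
    unfolding hat_act_def
    apply (subst P.finsum_addf[symmetric])
    using assms by (auto simp: pact_carr hat_carrierD Rc_comp pact_addv intro!: P.finsum_cong')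
qed

lemma hat_act_addr: assumes "r \<in> R_carrier H" "s \<in> R_carrier H" "u \<in> hat_carrier PM"
  shows "hat_act H PM pact (R_add H r s) u =
     (\<lambda>y. hat_act H PM pact r u y \<oplus>\<^bsub>PM y\<^esub> hat_act H PM pact s u y)"
proof
  fix y
  interpret P: abelian_monoid "PM y" by (rule PMam)
  define F where "F = {x. r x y \<noteq> \<zero>\<^bsub>H x y\<^esub>} \<union> {x. s x y \<noteq> \<zero>\<^bsub>H x y\<^esub>}"
  have fF: "finite F" unfolding F_def using Rc_fin_src assms by blast
  have ra: "R_add H r s \<in> R_carrier H" using R_add_carr assms by blast
  have s1: "{x. R_add H r s x y \<noteq> \<zero>\<^bsub>H x y\<^esub>} \<subseteq> F" unfolding F_def R_add_def
    using assms by (auto simp: Rc_comp)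
  have s2: "{x. r x y \<noteq> \<zero>\<^bsub>H x y\<^esub>} \<subseteq> F" "{x. s x y \<noteq> \<zero>\<^bsub>H x y\<^esub>} \<subseteq> F"
    unfolding F_def by auto
  show "hat_act H PM pact (R_add H r s) u y =
     hat_act H PM pact r u y \<oplus>\<^bsub>PM y\<^esub> hat_act H PM pact s u y"
    apply (subst hat_act_eq[where r="R_add H r s" and y=y and u=u and F=F, OF _ assms(3) fF s1], use ra Rc_comp in blast)
    apply (subst hat_act_eq[where r="r" and y=y and u=u and F=F, OF _ assms(3) fF s2(1)], use assms Rc_comp in blast)
    apply (subst hat_act_eq[where r="s" and y=y and u=u and F=F, OF _ assms(3) fF s2(2)], use assms Rc_comp in blast)
    apply (subst P.finsum_addf[symmetric])
    using assms by (auto simp: pact_carr hat_carrierD Rc_comp pact_addf R_add_def intro!: P.finsum_cong')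
qed


end


context emod begin
lemma hat_act_zero: "u \<in> hat_carrier PM \<Longrightarrow> hat_act H PM pact (R_zero H) u = (\<lambda>y. \<zero>\<^bsub>PM y\<^esub>)"
  using hat_act_single[OF zero_H, of u undefined undefined] single_zero[of undefined undefined]
  by (auto simp: pact_zf hat_carrierD)

lemma hat_act_ss: assumes f: "f \<in> carrier (H x y')" and g: "g \<in> carrier (H y z)" and u: "u \<in> hat_carrier PM"
  shows "hat_act H PM pact (R_mult H cmp (single y z g) (single x y' f)) u =
    hat_act H PM pact (single y z g) (hat_act H PM pact (single x y' f) u)"
proof -
  have ux: "u x \<in> carrier (PM x)" using hat_carrierD[OF u] .
  have i: "(\<lambda>b. if b = y' then pact x y' f (u x) else \<zero>\<^bsub>PM b\<^esub>) \<in> hat_carrier PM"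
    by (rule hat_carrierI) (simp add: pact_carr f ux)
  show ?thesis
  proof (cases "y' = y")
    case True
    have "hat_act H PM pact (single y z g) (hat_act H PM pact (single x y' f) u) =
      (\<lambda>b. if b = z then pact y z g (pact x y' f (u x)) else \<zero>\<^bsub>PM b\<^esub>)"
      unfolding hat_act_single[OF f u] hat_act_single[OF g i] using True by simp
    also have "\<dots> = hat_act H PM pact (single x z (cmp x y z g f)) u"
    proof -
      have f': "f \<in> carrier (H x y)" using f True by simp
      show ?thesis unfolding hat_act_single[OF cmp_carr[OF f' g] u] pact_cmp[OF f' g ux] by (simp only: True)
    qed
    finally show ?thesis using single_mult[OF f g] True by simp
  next
    case False
    have "hat_act H PM pact (single y z g) (hat_act H PM pact (single x y' f) u) =
      (\<lambda>b. if b = z then pact y z g \<zero>\<^bsub>PM y\<^esub> else \<zero>\<^bsub>PM b\<^esub>)"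
      unfolding hat_act_single[OF f u] hat_act_single[OF g i] using False by simp
    also have "\<dots> = (\<lambda>b. \<zero>\<^bsub>PM b\<^esub>)" using pact_zv[OF g] by auto
    finally show ?thesis using single_mult[OF f g] False hat_act_zero[OF u] by simp
  qed
qed

lemma hat_act_mult: assumes r: "r \<in> R_carrier H" and s: "s \<in> R_carrier H" and u: "u \<in> hat_carrier PM"
  shows "hat_act H PM pact (R_mult H cmp r s) u = hat_act H PM pact r (hat_act H PM pact s u)"
proof -
  have sc: "hat_act H PM pact (R_mult H cmp (single y z g) s) u =
     hat_act H PM pact (single y z g) (hat_act H PM pact s u)"
    if g: "g \<in> carrier (H y z)" and s: "s \<in> R_carrier H" for y z g s
  proof (rule R_induct[where Fa = "\<lambda>s. hat_act H PM pact (R_mult H cmp (single y z g) s) u"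
      and Fb = "\<lambda>s. hat_act H PM pact (single y z g) (hat_act H PM pact s u)"
      and pl = "\<lambda>a b. \<lambda>y. a y \<oplus>\<^bsub>PM y\<^esub> b y", OF _ _ _ s])
    fix s s' assume a: "s \<in> R_carrier H" "s' \<in> R_carrier H"
    show "hat_act H PM pact (R_mult H cmp (single y z g) (R_add H s s')) u =
      (\<lambda>ya. hat_act H PM pact (R_mult H cmp (single y z g) s) u ya \<oplus>\<^bsub>PM ya\<^esub>
            hat_act H PM pact (R_mult H cmp (single y z g) s') u ya)"
      using R_mult_addr[OF single_carr[OF g] a] hat_act_addr[OF R_mult_carr[OF single_carr[OF g] a(1)] R_mult_carr[OF single_carr[OF g] a(2)] u]
      by simp
    show "hat_act H PM pact (single y z g) (hat_act H PM pact (R_add H s s') u) =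
      (\<lambda>ya. hat_act H PM pact (single y z g) (hat_act H PM pact s u) ya \<oplus>\<^bsub>PM ya\<^esub>
            hat_act H PM pact (single y z g) (hat_act H PM pact s' u) ya)"
      using hat_act_addr[OF a u] hat_act_addp[OF single_carr[OF g] hat_act_carr[OF a(1) u] hat_act_carr[OF a(2) u]]
      by simp
  next
    fix x y' f assume f: "f \<in> carrier (H x y')"
    show "hat_act H PM pact (R_mult H cmp (single y z g) (single x y' f)) u =
      hat_act H PM pact (single y z g) (hat_act H PM pact (single x y' f) u)"
      by (rule hat_act_ss[OF f g u])
  qed
  show ?thesis
  proof (rule R_induct[where Fa = "\<lambda>r. hat_act H PM pact (R_mult H cmp r s) u"
      and Fb = "\<lambda>r. hat_act H PM pact r (hat_act H PM pact s u)"
      and pl = "\<lambda>a b. \<lambda>y. a y \<oplus>\<^bsub>PM y\<^esub> b y", OF _ _ _ r])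
    fix r r' assume a: "r \<in> R_carrier H" "r' \<in> R_carrier H"
    show "hat_act H PM pact (R_mult H cmp (R_add H r r') s) u =
      (\<lambda>ya. hat_act H PM pact (R_mult H cmp r s) u ya \<oplus>\<^bsub>PM ya\<^esub>
            hat_act H PM pact (R_mult H cmp r' s) u ya)"
      using R_mult_addl[OF a s] hat_act_addr[OF R_mult_carr[OF a(1) s] R_mult_carr[OF a(2) s] u]
      by simp
    show "hat_act H PM pact (R_add H r r') (hat_act H PM pact s u) =
      (\<lambda>ya. hat_act H PM pact r (hat_act H PM pact s u) ya \<oplus>\<^bsub>PM ya\<^esub>
            hat_act H PM pact r' (hat_act H PM pact s u) ya)"
      using hat_act_addr[OF a hat_act_carr[OF s u]] by simp
  next
    fix x y f assume f: "f \<in> carrier (H x y)"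
    show "hat_act H PM pact (R_mult H cmp (single x y f) s) u =
      hat_act H PM pact (single x y f) (hat_act H PM pact s u)" by (rule sc[OF f s])
  qed
qed

lemma hat_R_module: "R_module H cmp (hat_module PM) (hat_act H PM pact)"
  unfolding R_module_def
proof (intro conjI ballI)
  show "abelian_group (hat_module PM)" by (rule hatab)
  fix r s p q assume "r \<in> R_carrier H" "s \<in> R_carrier H" "p \<in> carrier (hat_module PM)" "q \<in> carrier (hat_module PM)"
  then show "hat_act H PM pact r p \<in> carrier (hat_module PM)"
    "hat_act H PM pact r (p \<oplus>\<^bsub>hat_module PM\<^esub> q) = hat_act H PM pact r p \<oplus>\<^bsub>hat_module PM\<^esub> hat_act H PM pact r q"
    "hat_act H PM pact (R_add H r s) p = hat_act H PM pact r p \<oplus>\<^bsub>hat_module PM\<^esub> hat_act H PM pact s p"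
    "hat_act H PM pact (R_mult H cmp r s) p = hat_act H PM pact r (hat_act H PM pact s p)"
    using hat_act_carr hat_act_addp hat_act_addr hat_act_mult by simp_all
qed

lemma hat_c_unital: "c_unital H cmp (hat_module PM) (hat_act H PM pact)"
  unfolding c_unital_def bij_betw_def
proof (intro conjI)
  let ?\<Phi> = "\<lambda>p. \<lambda>r\<in>R_carrier H. hat_act H PM pact r p"
  show "inj_on ?\<Phi> (carrier (hat_module PM))"
  proof (rule inj_onI)
    fix p q assume p: "p \<in> carrier (hat_module PM)" and q: "q \<in> carrier (hat_module PM)"
      and eq: "?\<Phi> p = ?\<Phi> q"
    show "p = q"
    proof
      fix x
      have "?\<Phi> p (e x) = ?\<Phi> q (e x)" using eq by simp
      then have "hat_act H PM pact (e x) p x = hat_act H PM pact (e x) q x" using e_carr by simp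
      then show "p x = q x" using hat_act_e p q by simp
    qed
  qed
  show "?\<Phi> ` carrier (hat_module PM) = R_hom H (R_self H cmp) (R_mult H cmp) (hat_module PM) (hat_act H PM pact)"
  proof (intro equalityI subsetI)
    fix \<phi> assume "\<phi> \<in> ?\<Phi> ` carrier (hat_module PM)"
    then obtain p where p: "p \<in> hat_carrier PM" and ph: "\<phi> = ?\<Phi> p" by auto
    show "\<phi> \<in> R_hom H (R_self H cmp) (R_mult H cmp) (hat_module PM) (hat_act H PM pact)"
      unfolding R_hom_def ph
      apply (intro CollectI conjI ballI)
      subgoal using p hat_act_carr by simp
      subgoal for r s using p hat_act_addr R_add_carr by simp
      subgoal for r s using p R_mult_carr hat_act_mult by simp
      done
  next
    fix \<phi> assume ph: "\<phi> \<in> R_hom H (R_self H cmp) (R_mult H cmp) (hat_module PM) (hat_act H PM pact)"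
    have phE: "\<phi> \<in> R_carrier H \<rightarrow>\<^sub>E hat_carrier PM" using ph unfolding R_hom_def by simp
    have phA': "\<forall>r\<in>R_carrier H. \<forall>s\<in>R_carrier H. \<phi> (R_add H r s) = (\<lambda>x. \<phi> r x \<oplus>\<^bsub>PM x\<^esub> \<phi> s x)"
      using ph unfolding R_hom_def by simp
    have phM': "\<forall>r\<in>R_carrier H. \<forall>s\<in>R_carrier H. \<phi> (R_mult H cmp r s) = hat_act H PM pact r (\<phi> s)"
      using ph unfolding R_hom_def by simp
    have phA: "\<And>r s. r \<in> R_carrier H \<Longrightarrow> s \<in> R_carrier H \<Longrightarrow> \<phi> (R_add H r s) = (\<lambda>x. \<phi> r x \<oplus>\<^bsub>PM x\<^esub> \<phi> s x)"
      using phA' by blast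
    have phM: "\<And>r s. r \<in> R_carrier H \<Longrightarrow> s \<in> R_carrier H \<Longrightarrow> \<phi> (R_mult H cmp r s) = hat_act H PM pact r (\<phi> s)"
      using phM' by blast
    define u where "u = (\<lambda>x. \<phi> (e x) x)"
    have u: "u \<in> hat_carrier PM" unfolding u_def
      by (rule hat_carrierI, rule hat_carrierD, rule PiE_mem[OF phE e_carr])
    have "\<phi> = ?\<Phi> u"
    proof
      fix r show "\<phi> r = ?\<Phi> u r"
      proof (cases "r \<in> R_carrier H")
        case False then show ?thesis using PiE_arb[OF phE False] by simp
      next
        case True
        have "\<phi> r = hat_act H PM pact r u"
        proof (rule R_induct[where Fa = \<phi> and Fb = "\<lambda>r. hat_act H PM pact r u" and pl = "\<lambda>a b. \<lambda>y. a y \<oplus>\<^bsub>PM y\<^esub> b y", OF _ _ _ True])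
          fix r s assume "r \<in> R_carrier H" "s \<in> R_carrier H"
          then show "\<phi> (R_add H r s) = (\<lambda>y. \<phi> r y \<oplus>\<^bsub>PM y\<^esub> \<phi> s y)" by (rule phA)
          show "hat_act H PM pact (R_add H r s) u =
             (\<lambda>y. hat_act H PM pact r u y \<oplus>\<^bsub>PM y\<^esub> hat_act H PM pact s u y)"
            using hat_act_addr \<open>r \<in> R_carrier H\<close> \<open>s \<in> R_carrier H\<close> u by blast
        next
          fix x y f assume f: "f \<in> carrier (H x y)"
          have "\<phi> (single x y f) = \<phi> (R_mult H cmp (single x y f) (e x))" using e_mult_single[OF f] by simp
          also have "\<dots> = hat_act H PM pact (single x y f) (\<phi> (e x))"
            using phM single_carr[OF f] e_carr by blast
          also have "\<dots> = hat_act H PM pact (single x y f) u"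
            unfolding hat_act_single[OF f u] hat_act_single[OF f PiE_mem[OF phE e_carr[of x]]] by (simp only: u_def)
          finally show "\<phi> (single x y f) = hat_act H PM pact (single x y f) u" .
        qed
        then show ?thesis using True by simp
      qed
    qed
    then show "\<phi> \<in> ?\<Phi> ` carrier (hat_module PM)" using u by auto
  qed
qed

end



lemma hat_hom_simp: "u \<in> hat_carrier PM \<Longrightarrow> hat_hom PM \<eta> u = (\<lambda>x. \<eta> x (u x))"
  by (simp add: hat_hom_def)

context pcat begin

lemma part2:
  assumes EP: "E_module H cmp idn PM pact" and EQ: "E_module H cmp idn QM qact"
  shows "bij_betw (hat_hom PM) (E_hom H PM pact QM qact)
          (R_hom H (hat_module PM) (hat_act H PM pact) (hat_module QM) (hat_act H QM qact))"
proof -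
  interpret P: emod H cmp idn PM pact by unfold_locales (rule EP)
  interpret Q: emod H cmp idn QM qact by unfold_locales (rule EQ)
  define \<delta> where "\<delta> = (\<lambda>x v. \<lambda>b. if b = x then v else \<zero>\<^bsub>PM b\<^esub>)"
  have \<delta>c: "v \<in> carrier (PM x) \<Longrightarrow> \<delta> x v \<in> hat_carrier PM" for x v
    unfolding \<delta>_def by (rule hat_carrierI) auto
  have EH: "\<eta> \<in> E_hom H PM pact QM qact \<longleftrightarrow>
     (\<forall>x. \<eta> x \<in> carrier (PM x) \<rightarrow>\<^sub>E carrier (QM x)) \<and>
     (\<forall>x. \<forall>v\<in>carrier (PM x). \<forall>w\<in>carrier (PM x). \<eta> x (v \<oplus>\<^bsub>PM x\<^esub> w) = \<eta> x v \<oplus>\<^bsub>QM x\<^esub> \<eta> x w) \<and>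
     (\<forall>x y f v. f \<in> carrier (H x y) \<longrightarrow> v \<in> carrier (PM x) \<longrightarrow> \<eta> y (pact x y f v) = qact x y f (\<eta> x v))" for \<eta>
    unfolding E_hom_def by simp
  have RH: "\<psi> \<in> R_hom H (hat_module PM) (hat_act H PM pact) (hat_module QM) (hat_act H QM qact) \<longleftrightarrow>
     \<psi> \<in> hat_carrier PM \<rightarrow>\<^sub>E hat_carrier QM \<and>
     (\<forall>p\<in>hat_carrier PM. \<forall>q\<in>hat_carrier PM. \<psi> (\<lambda>x. p x \<oplus>\<^bsub>PM x\<^esub> q x) = (\<lambda>x. \<psi> p x \<oplus>\<^bsub>QM x\<^esub> \<psi> q x)) \<and>
     (\<forall>r\<in>R_carrier H. \<forall>p\<in>hat_carrier PM. \<psi> (hat_act H PM pact r p) = hat_act H QM qact r (\<psi> p))" for \<psi>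
    unfolding R_hom_def by simp
  show ?thesis unfolding bij_betw_def
  proof (intro conjI)
    show "inj_on (hat_hom PM) (E_hom H PM pact QM qact)"
    proof (rule inj_onI)
      fix \<eta> \<eta>' assume h: "\<eta> \<in> E_hom H PM pact QM qact" "\<eta>' \<in> E_hom H PM pact QM qact"
        and eq: "hat_hom PM \<eta> = hat_hom PM \<eta>'"
      show "\<eta> = \<eta>'"
      proof (intro ext)
        fix x v
        show "\<eta> x v = \<eta>' x v"
        proof (cases "v \<in> carrier (PM x)")
          case True
          have "hat_hom PM \<eta> (\<delta> x v) x = hat_hom PM \<eta>' (\<delta> x v) x" using eq by simp
          then show ?thesis using \<delta>c[OF True] by (simp add: hat_hom_simp \<delta>_def)
        next
          case False
          have "\<eta> x \<in> carrier (PM x) \<rightarrow>\<^sub>E carrier (QM x)" "\<eta>' x \<in> carrier (PM x) \<rightarrow>\<^sub>E carrier (QM x)"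
            using h unfolding E_hom_def by simp_all
          then show ?thesis using PiE_arb False by metis
        qed
      qed
    qed
    show "hat_hom PM ` E_hom H PM pact QM qact =
      R_hom H (hat_module PM) (hat_act H PM pact) (hat_module QM) (hat_act H QM qact)"
    proof (intro equalityI subsetI)
      fix \<psi> assume "\<psi> \<in> hat_hom PM ` E_hom H PM pact QM qact"
      then obtain \<eta> where h: "\<eta> \<in> E_hom H PM pact QM qact" and ps: "\<psi> = hat_hom PM \<eta>" by auto
      have hP: "\<forall>x. \<eta> x \<in> carrier (PM x) \<rightarrow>\<^sub>E carrier (QM x)"
        and hA': "\<forall>x. \<forall>v\<in>carrier (PM x). \<forall>w\<in>carrier (PM x). \<eta> x (v \<oplus>\<^bsub>PM x\<^esub> w) = \<eta> x v \<oplus>\<^bsub>QM x\<^esub> \<eta> x w"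
        and hN': "\<forall>x y f v. f \<in> carrier (H x y) \<longrightarrow> v \<in> carrier (PM x) \<longrightarrow> \<eta> y (pact x y f v) = qact x y f (\<eta> x v)"
        using h unfolding E_hom_def by simp_all
      have hE: "\<And>x v. v \<in> carrier (PM x) \<Longrightarrow> \<eta> x v \<in> carrier (QM x)"
        using hP PiE_mem by metis
      have hA: "\<And>x v w. v \<in> carrier (PM x) \<Longrightarrow> w \<in> carrier (PM x) \<Longrightarrow> \<eta> x (v \<oplus>\<^bsub>PM x\<^esub> w) = \<eta> x v \<oplus>\<^bsub>QM x\<^esub> \<eta> x w"
        using hA' by blast
      have hN: "\<And>x y f v. f \<in> carrier (H x y) \<Longrightarrow> v \<in> carrier (PM x) \<Longrightarrow> \<eta> y (pact x y f v) = qact x y f (\<eta> x v)"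
        using hN' by blast
      have h0: "\<eta> x \<zero>\<^bsub>PM x\<^esub> = \<zero>\<^bsub>QM x\<^esub>" for x
      proof (rule ab_idem_zero[OF Q.PMab])
        show "\<eta> x \<zero>\<^bsub>PM x\<^esub> \<in> carrier (QM x)" by (rule hE) simp
        have "\<eta> x (\<zero>\<^bsub>PM x\<^esub> \<oplus>\<^bsub>PM x\<^esub> \<zero>\<^bsub>PM x\<^esub>) = \<eta> x \<zero>\<^bsub>PM x\<^esub> \<oplus>\<^bsub>QM x\<^esub> \<eta> x \<zero>\<^bsub>PM x\<^esub>"
          by (rule hA) simp_all
        then show "\<eta> x \<zero>\<^bsub>PM x\<^esub> \<oplus>\<^bsub>QM x\<^esub> \<eta> x \<zero>\<^bsub>PM x\<^esub> = \<eta> x \<zero>\<^bsub>PM x\<^esub>" by simp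
      qed
      have hu: "(\<lambda>x. \<eta> x (u x)) \<in> hat_carrier QM" if "u \<in> hat_carrier PM" for u
        using that by (simp add: hat_carrier_def hE)
      have lin: "(\<lambda>y. \<eta> y (hat_act H PM pact r u y)) = hat_act H QM qact r (\<lambda>x. \<eta> x (u x))"
        if r: "r \<in> R_carrier H" and u: "u \<in> hat_carrier PM" for r u
      proof (rule R_induct[where Fa = "\<lambda>r. (\<lambda>y. \<eta> y (hat_act H PM pact r u y))"
            and Fb = "\<lambda>r. hat_act H QM qact r (\<lambda>x. \<eta> x (u x))"
            and pl = "\<lambda>a b. \<lambda>y. a y \<oplus>\<^bsub>QM y\<^esub> b y", OF _ _ _ r])
        fix r s assume a: "r \<in> R_carrier H" "s \<in> R_carrier H"
        show "(\<lambda>y. \<eta> y (hat_act H PM pact (R_add H r s) u y)) =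
          (\<lambda>y. \<eta> y (hat_act H PM pact r u y) \<oplus>\<^bsub>QM y\<^esub> \<eta> y (hat_act H PM pact s u y))"
          using P.hat_act_addr[OF a u] hA hat_carrierD[OF P.hat_act_carr[OF a(1) u]]
            hat_carrierD[OF P.hat_act_carr[OF a(2) u]] by simp
        show "hat_act H QM qact (R_add H r s) (\<lambda>x. \<eta> x (u x)) =
          (\<lambda>y. hat_act H QM qact r (\<lambda>x. \<eta> x (u x)) y \<oplus>\<^bsub>QM y\<^esub> hat_act H QM qact s (\<lambda>x. \<eta> x (u x)) y)"
          by (rule Q.hat_act_addr[OF a hu[OF u]])
      next
        fix x y f assume f: "f \<in> carrier (H x y)"
        show "(\<lambda>b. \<eta> b (hat_act H PM pact (single x y f) u b)) = hat_act H QM qact (single x y f) (\<lambda>x. \<eta> x (u x))"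
          unfolding P.hat_act_single[OF f u] Q.hat_act_single[OF f hu[OF u]]
          using h0 hN[OF f hat_carrierD[OF u]] by auto
      qed
      show "\<psi> \<in> R_hom H (hat_module PM) (hat_act H PM pact) (hat_module QM) (hat_act H QM qact)"
        unfolding RH
      proof (intro conjI ballI)
        show "\<psi> \<in> hat_carrier PM \<rightarrow>\<^sub>E hat_carrier QM"
          unfolding ps hat_hom_def restrict_PiE_iff using hu by blast
        fix p q assume p: "p \<in> hat_carrier PM" and q: "q \<in> hat_carrier PM"
        have pq: "(\<lambda>x. p x \<oplus>\<^bsub>PM x\<^esub> q x) \<in> hat_carrier PM"
          using p q by (simp add: hat_carrier_def)
        show "\<psi> (\<lambda>x. p x \<oplus>\<^bsub>PM x\<^esub> q x) = (\<lambda>x. \<psi> p x \<oplus>\<^bsub>QM x\<^esub> \<psi> q x)"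
          unfolding ps hat_hom_simp[OF pq] hat_hom_simp[OF p] hat_hom_simp[OF q]
          using hA hat_carrierD[OF p] hat_carrierD[OF q] by simp
      next
        fix r p assume r: "r \<in> R_carrier H" and p: "p \<in> hat_carrier PM"
        show "\<psi> (hat_act H PM pact r p) = hat_act H QM qact r (\<psi> p)"
          unfolding ps hat_hom_simp[OF p] hat_hom_simp[OF P.hat_act_carr[OF r p]]
          by (rule lin[OF r p])
      qed
    next
      fix \<psi> assume ps: "\<psi> \<in> R_hom H (hat_module PM) (hat_act H PM pact) (hat_module QM) (hat_act H QM qact)"
      have pE: "\<psi> \<in> hat_carrier PM \<rightarrow>\<^sub>E hat_carrier QM"
        and pA': "\<forall>p\<in>hat_carrier PM. \<forall>q\<in>hat_carrier PM. \<psi> (\<lambda>x. p x \<oplus>\<^bsub>PM x\<^esub> q x) = (\<lambda>x. \<psi> p x \<oplus>\<^bsub>QM x\<^esub> \<psi> q x)"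
        and pL': "\<forall>r\<in>R_carrier H. \<forall>p\<in>hat_carrier PM. \<psi> (hat_act H PM pact r p) = hat_act H QM qact r (\<psi> p)"
        using ps unfolding RH by simp_all
      have pA: "\<And>p q. p \<in> hat_carrier PM \<Longrightarrow> q \<in> hat_carrier PM \<Longrightarrow> \<psi> (\<lambda>x. p x \<oplus>\<^bsub>PM x\<^esub> q x) = (\<lambda>x. \<psi> p x \<oplus>\<^bsub>QM x\<^esub> \<psi> q x)"
        using pA' by blast
      have pL: "\<And>r p. r \<in> R_carrier H \<Longrightarrow> p \<in> hat_carrier PM \<Longrightarrow> \<psi> (hat_act H PM pact r p) = hat_act H QM qact r (\<psi> p)"
        using pL' by blast
      have pc: "p \<in> hat_carrier PM \<Longrightarrow> \<psi> p x \<in> carrier (QM x)" for p x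
        by (rule hat_carrierD, rule PiE_mem[OF pE])
      define \<eta> where "\<eta> = (\<lambda>x. \<lambda>v\<in>carrier (PM x). \<psi> (\<delta> x v) x)"
      have "\<eta> \<in> E_hom H PM pact QM qact"
        unfolding EH
      proof (intro conjI allI impI ballI)
        fix x
        show "\<eta> x \<in> carrier (PM x) \<rightarrow>\<^sub>E carrier (QM x)" unfolding \<eta>_def restrict_PiE_iff using pc \<delta>c by blast
        fix v w assume v: "v \<in> carrier (PM x)" and w: "w \<in> carrier (PM x)"
        have "\<delta> x (v \<oplus>\<^bsub>PM x\<^esub> w) = (\<lambda>b. \<delta> x v b \<oplus>\<^bsub>PM b\<^esub> \<delta> x w b)"
          unfolding \<delta>_def using v w by auto
        then show "\<eta> x (v \<oplus>\<^bsub>PM x\<^esub> w) = \<eta> x v \<oplus>\<^bsub>QM x\<^esub> \<eta> x w"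
          unfolding \<eta>_def using v w pA[OF \<delta>c[OF v] \<delta>c[OF w]] by simp
      next
        fix x y f v assume f: "f \<in> carrier (H x y)" and v: "v \<in> carrier (PM x)"
        have pv: "pact x y f v \<in> carrier (PM y)" using P.pact_carr f v by blast
        have "\<delta> y (pact x y f v) = hat_act H PM pact (single x y f) (\<delta> x v)"
        proof -
          have dx: "\<delta> x v x = v" by (simp add: \<delta>_def)
          show ?thesis unfolding P.hat_act_single[OF f \<delta>c[OF v]] dx unfolding \<delta>_def by (rule refl)
        qed
        then have "\<psi> (\<delta> y (pact x y f v)) = hat_act H QM qact (single x y f) (\<psi> (\<delta> x v))"
          using pL[OF single_carr[OF f] \<delta>c[OF v]] by simp
        also have "\<dots> = (\<lambda>b. if b = y then qact x y f (\<psi> (\<delta> x v) x) else \<zero>\<^bsub>QM b\<^esub>)"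
          by (rule Q.hat_act_single[OF f PiE_mem[OF pE \<delta>c[OF v]]])
        finally show "\<eta> y (pact x y f v) = qact x y f (\<eta> x v)"
          unfolding \<eta>_def using v pv by simp
      qed
      moreover have "hat_hom PM \<eta> = \<psi>"
      proof
        fix u show "hat_hom PM \<eta> u = \<psi> u"
        proof (cases "u \<in> hat_carrier PM")
          case False
          then show ?thesis using PiE_arb[OF pE False] by (simp add: hat_hom_def)
        next
          case True
          show ?thesis
          proof
            fix x
            have "\<delta> x (u x) = hat_act H PM pact (e x) u"
              unfolding P.hat_act_e[OF True] \<delta>_def by simp
            then have "\<psi> (\<delta> x (u x)) x = hat_act H QM qact (e x) (\<psi> u) x"
              using pL[OF e_carr True] by simp
            also have "\<dots> = \<psi> u x" using Q.hat_act_e[OF PiE_mem[OF pE True]] by simp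
            finally show "hat_hom PM \<eta> u x = \<psi> u x"
              unfolding hat_hom_simp[OF True] \<eta>_def using hat_carrierD[OF True] by simp
          qed
        qed
      qed
      ultimately show "\<psi> \<in> hat_hom PM ` E_hom H PM pact QM qact" by blast
    qed
  qed
qed

end



locale rmod = pcat H cmp idn
  for H :: "'o \<Rightarrow> 'o \<Rightarrow> 'm ring" and cmp idn +
  fixes M :: "'p ring" and act :: "('o \<Rightarrow> 'o \<Rightarrow> 'm) \<Rightarrow> 'p \<Rightarrow> 'p"
  assumes rm: "R_module H cmp M act" and cu: "c_unital H cmp M act"
begin

lemma Mab: "abelian_group M" using rm unfolding R_module_def by blast
lemma Mam: "abelian_monoid M" using Mab abelian_group.axioms(1) by blast
lemma act_carr: "r \<in> R_carrier H \<Longrightarrow> p \<in> carrier M \<Longrightarrow> act r p \<in> carrier M"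
  using rm unfolding R_module_def by blast
lemma act_addp: "r \<in> R_carrier H \<Longrightarrow> p \<in> carrier M \<Longrightarrow> q \<in> carrier M \<Longrightarrow> act r (p \<oplus>\<^bsub>M\<^esub> q) = act r p \<oplus>\<^bsub>M\<^esub> act r q"
  using rm unfolding R_module_def by blast
lemma act_addr: "r \<in> R_carrier H \<Longrightarrow> s \<in> R_carrier H \<Longrightarrow> p \<in> carrier M \<Longrightarrow> act (R_add H r s) p = act r p \<oplus>\<^bsub>M\<^esub> act s p"
  using rm unfolding R_module_def by blast
lemma act_mult: "r \<in> R_carrier H \<Longrightarrow> s \<in> R_carrier H \<Longrightarrow> p \<in> carrier M \<Longrightarrow> act (R_mult H cmp r s) p = act r (act s p)"
  using rm unfolding R_module_def by blast

lemma M_zero[simp]: "\<zero>\<^bsub>M\<^esub> \<in> carrier M" using abelian_monoid.zero_closed[OF Mam] .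
lemma M_lz[simp]: "p \<in> carrier M \<Longrightarrow> \<zero>\<^bsub>M\<^esub> \<oplus>\<^bsub>M\<^esub> p = p" using abelian_monoid.l_zero[OF Mam] by blast
lemma M_rz[simp]: "p \<in> carrier M \<Longrightarrow> p \<oplus>\<^bsub>M\<^esub> \<zero>\<^bsub>M\<^esub> = p" using abelian_monoid.r_zero[OF Mam] by blast
lemma M_cl[simp]: "p \<in> carrier M \<Longrightarrow> q \<in> carrier M \<Longrightarrow> p \<oplus>\<^bsub>M\<^esub> q \<in> carrier M"
  using abelian_monoid.a_closed[OF Mam] by blast

lemma R_add_zero: "R_add H (R_zero H) (R_zero H) = R_zero H"
  by (simp add: R_add_def R_zero_def)

lemma act_zero_r: "p \<in> carrier M \<Longrightarrow> act (R_zero H) p = \<zero>\<^bsub>M\<^esub>"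
  by (rule ab_idem_zero[OF Mab]) (simp_all add: act_carr R_zero_carr act_addr[symmetric] R_add_zero)

lemma act_zero_p: "r \<in> R_carrier H \<Longrightarrow> act r \<zero>\<^bsub>M\<^esub> = \<zero>\<^bsub>M\<^esub>"
  by (rule ab_idem_zero[OF Mab]) (simp_all add: act_carr act_addp[symmetric])

lemma act_finsum: assumes r: "r \<in> R_carrier H" and F: "finite F"
  shows "f \<in> F \<rightarrow> carrier M \<Longrightarrow> act r (finsum M f F) = finsum M (\<lambda>x. act r (f x)) F"
  using F
proof (induction F)
  case empty
  interpret abelian_monoid M by (rule Mam)
  show ?case using act_zero_p[OF r] by simp
next
  case (insert a F)
  interpret abelian_monoid M by (rule Mam)
  have fa: "f a \<in> carrier M" "f \<in> F \<rightarrow> carrier M" using insert.prems by auto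
  have "act r (finsum M f (insert a F)) = act r (f a \<oplus>\<^bsub>M\<^esub> finsum M f F)"
    using finsum_insert[OF insert.hyps fa(2) fa(1)] by simp
  also have "\<dots> = act r (f a) \<oplus>\<^bsub>M\<^esub> finsum M (\<lambda>x. act r (f x)) F"
    using act_addp[OF r fa(1) finsum_closed[OF fa(2)]] insert.IH[OF fa(2)] by simp
  also have "\<dots> = finsum M (\<lambda>x. act r (f x)) (insert a F)"
  proof -
    have "(\<lambda>x. act r (f x)) \<in> F \<rightarrow> carrier M" using fa(2) act_carr[OF r] by auto
    then show ?thesis using finsum_insert[OF insert.hyps, of "\<lambda>x. act r (f x)"] fa(1) act_carr[OF r] by simp
  qed
  finally show ?case .
qed

lemma e_idem: "R_mult H cmp (e x) (e x) = e x"
  using single_mult_e[OF idn_carr, of x] unfolding e_def by simp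

lemma e_other: "b \<noteq> y \<Longrightarrow> f \<in> carrier (H x y) \<Longrightarrow> R_mult H cmp (e b) (single x y f) = R_zero H"
  unfolding e_def using single_mult[OF _ idn_carr, of f x y b] by simp

lemma mult_e_zero: assumes r: "r \<in> R_carrier H" and x: "x \<notin> fst ` supp r"
  shows "R_mult H cmp r (e x) = R_zero H"
proof (intro ext)
  fix a c
  have "{b. e x a b \<noteq> \<zero>\<^bsub>H a b\<^esub> \<and> r b c \<noteq> \<zero>\<^bsub>H b c\<^esub>} = {}"
  proof -
    { fix b assume "e x a b \<noteq> \<zero>\<^bsub>H a b\<^esub>" "r b c \<noteq> \<zero>\<^bsub>H b c\<^esub>"
      then have "b = x" "(b, c) \<in> supp r" unfolding e_def single_def supp_def by (auto split: if_splits)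
      then have False using x by force }
    then show ?thesis by blast
  qed
  then have "R_mult H cmp r (e x) a c = finsum (H a c) (\<lambda>b. cmp a b c (r b c) (e x a b)) {}"
    unfolding R_mult_def by (simp only:)
  then show "R_mult H cmp r (e x) a c = R_zero H a c"
    using abelian_monoid.finsum_empty[OF Ham] by (simp add: R_zero_def)
qed

definition PM :: "'o \<Rightarrow> 'p ring" where
  "PM = (\<lambda>x. M\<lparr>carrier := act (e x) ` carrier M\<rparr>)"
definition pact :: "'o \<Rightarrow> 'o \<Rightarrow> 'm \<Rightarrow> 'p \<Rightarrow> 'p" where
  "pact = (\<lambda>x y f v. act (single x y f) v)"

lemma PM_carrier[simp]: "carrier (PM x) = act (e x) ` carrier M" by (simp add: PM_def)
lemma PM_add[simp]: "v \<oplus>\<^bsub>PM x\<^esub> w = v \<oplus>\<^bsub>M\<^esub> w" by (simp add: PM_def)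
lemma PM_zero[simp]: "\<zero>\<^bsub>PM x\<^esub> = \<zero>\<^bsub>M\<^esub>" by (simp add: PM_def)

lemma PM_sub: "v \<in> carrier (PM x) \<Longrightarrow> v \<in> carrier M"
  using act_carr[OF e_carr] by auto

lemma e_fix: assumes "v \<in> carrier (PM x)" shows "act (e x) v = v"
proof -
  obtain p where p: "p \<in> carrier M" "v = act (e x) p" using assms by auto
  have "act (e x) (act (e x) p) = act (R_mult H cmp (e x) (e x)) p" using act_mult[OF e_carr e_carr p(1)] by simp
  also have "\<dots> = act (e x) p" using e_idem by simp
  finally show ?thesis using p by simp
qed

lemma PM_ab: "abelian_group (PM x)"
proof (rule abelian_groupI)
  interpret abelian_group M by (rule Mab)
  fix v w z assume v: "v \<in> carrier (PM x)" and w: "w \<in> carrier (PM x)" and z: "z \<in> carrier (PM x)"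
  then obtain p q where p: "p \<in> carrier M" "v = act (e x) p" and q: "q \<in> carrier M" "w = act (e x) q" by auto
  have "v \<oplus>\<^bsub>PM x\<^esub> w = act (e x) (p \<oplus>\<^bsub>M\<^esub> q)" using p q act_addp[OF e_carr p(1) q(1)] by simp
  then show "v \<oplus>\<^bsub>PM x\<^esub> w \<in> carrier (PM x)" using M_cl[OF p(1) q(1)] by (metis PM_carrier imageI)
  show "v \<oplus>\<^bsub>PM x\<^esub> w \<oplus>\<^bsub>PM x\<^esub> z = v \<oplus>\<^bsub>PM x\<^esub> (w \<oplus>\<^bsub>PM x\<^esub> z)"
    using PM_sub v w z a_assoc by simp
  show "v \<oplus>\<^bsub>PM x\<^esub> w = w \<oplus>\<^bsub>PM x\<^esub> v"
    using PM_sub v w a_comm by simp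
  show "\<zero>\<^bsub>PM x\<^esub> \<oplus>\<^bsub>PM x\<^esub> v = v" using PM_sub v by simp
  show "\<exists>y\<in>carrier (PM x). y \<oplus>\<^bsub>PM x\<^esub> v = \<zero>\<^bsub>PM x\<^esub>"
  proof (rule bexI)
    show "act (e x) (\<ominus>\<^bsub>M\<^esub> p) \<oplus>\<^bsub>PM x\<^esub> v = \<zero>\<^bsub>PM x\<^esub>"
      using p act_addp[OF e_carr a_inv_closed[OF p(1)] p(1)] act_zero_p[OF e_carr] l_neg[OF p(1)] by simp
    show "act (e x) (\<ominus>\<^bsub>M\<^esub> p) \<in> carrier (PM x)" using p by simp
  qed
next
  show "\<zero>\<^bsub>PM x\<^esub> \<in> carrier (PM x)"
    using act_zero_p[OF e_carr, of x] M_zero by (simp add: image_iff) (metis M_zero)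
qed

lemma single_add: "f \<in> carrier (H x y) \<Longrightarrow> f' \<in> carrier (H x y) \<Longrightarrow>
  single x y (f \<oplus>\<^bsub>H x y\<^esub> f') = R_add H (single x y f) (single x y f')"
  by (intro ext) (auto simp: single_def R_add_def)

lemma PM_E_module: "E_module H cmp idn PM pact"
  unfolding E_module_def
proof (intro conjI allI impI ballI)
  fix x show "abelian_group (PM x)" by (rule PM_ab)
next
  fix x y f v assume f: "f \<in> carrier (H x y)" and v: "v \<in> carrier (PM x)"
  have "act (e y) (act (single x y f) v) = act (R_mult H cmp (e y) (single x y f)) v"
    using act_mult[OF e_carr[of y] single_carr[OF f] PM_sub[OF v]] by simp
  also have "\<dots> = act (single x y f) v" using single_mult_e[OF f] by simp
  finally have "act (e y) (act (single x y f) v) = act (single x y f) v" .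
  moreover have "act (single x y f) v \<in> carrier M" using act_carr[OF single_carr[OF f] PM_sub[OF v]] .
  ultimately show "pact x y f v \<in> carrier (PM y)" unfolding pact_def PM_carrier by (metis image_eqI)
next
  fix x y f v w assume f: "f \<in> carrier (H x y)" and v: "v \<in> carrier (PM x)" and w: "w \<in> carrier (PM x)"
  show "pact x y f (v \<oplus>\<^bsub>PM x\<^esub> w) = pact x y f v \<oplus>\<^bsub>PM y\<^esub> pact x y f w"
    unfolding pact_def using act_addp[OF single_carr[OF f] PM_sub[OF v] PM_sub[OF w]] by simp
next
  fix x y f f' v assume f: "f \<in> carrier (H x y)" and f': "f' \<in> carrier (H x y)" and v: "v \<in> carrier (PM x)"
  show "pact x y (f \<oplus>\<^bsub>H x y\<^esub> f') v = pact x y f v \<oplus>\<^bsub>PM y\<^esub> pact x y f' v"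
    unfolding pact_def single_add[OF f f'] using act_addr[OF single_carr[OF f] single_carr[OF f'] PM_sub[OF v]] by simp
next
  fix x v assume v: "v \<in> carrier (PM x)"
  show "pact x x (idn x) v = v" unfolding pact_def using e_fix[OF v] by (simp add: e_def)
next
  fix x y z f g v assume f: "f \<in> carrier (H x y)" and g: "g \<in> carrier (H y z)" and v: "v \<in> carrier (PM x)"
  show "pact x z (cmp x y z g f) v = pact y z g (pact x y f v)"
    unfolding pact_def using single_mult[OF f g] act_mult[OF single_carr[OF g] single_carr[OF f] PM_sub[OF v]] by simp
qed

end



context rmod begin

definition phi :: "'p \<Rightarrow> 'o \<Rightarrow> 'p" where
  "phi = (\<lambda>m\<in>carrier M. \<lambda>x. act (e x) m)"

lemma phi_carr: "m \<in> carrier M \<Longrightarrow> (\<lambda>x. act (e x) m) \<in> hat_carrier PM"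
  by (simp add: hat_carrier_def)

lemma phi_hom: "phi \<in> R_hom H M act (hat_module PM) (hat_act H PM pact)"
proof -
  interpret P: emod H cmp idn PM pact by unfold_locales (rule PM_E_module)
  have lin: "(\<lambda>y. act (e y) (act r m)) = hat_act H PM pact r (\<lambda>x. act (e x) m)"
    if r: "r \<in> R_carrier H" and m: "m \<in> carrier M" for r m
  proof (rule R_induct[where Fa = "\<lambda>r. \<lambda>y. act (e y) (act r m)"
      and Fb = "\<lambda>r. hat_act H PM pact r (\<lambda>x. act (e x) m)"
      and pl = "\<lambda>a b. \<lambda>y. a y \<oplus>\<^bsub>M\<^esub> b y", OF _ _ _ r])
    fix r s assume a: "r \<in> R_carrier H" "s \<in> R_carrier H"
    show "(\<lambda>y. act (e y) (act (R_add H r s) m)) = (\<lambda>y. act (e y) (act r m) \<oplus>\<^bsub>M\<^esub> act (e y) (act s m))"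
      using act_addr[OF a m] act_addp[OF e_carr act_carr[OF a(1) m] act_carr[OF a(2) m]] by simp
    show "hat_act H PM pact (R_add H r s) (\<lambda>x. act (e x) m) =
      (\<lambda>y. hat_act H PM pact r (\<lambda>x. act (e x) m) y \<oplus>\<^bsub>M\<^esub> hat_act H PM pact s (\<lambda>x. act (e x) m) y)"
      using P.hat_act_addr[OF a phi_carr[OF m]] by simp
  next
    fix x y f assume f: "f \<in> carrier (H x y)"
    show "(\<lambda>b. act (e b) (act (single x y f) m)) = hat_act H PM pact (single x y f) (\<lambda>x. act (e x) m)"
      unfolding P.hat_act_single[OF f phi_carr[OF m]]
    proof
      fix b
      have "act (e b) (act (single x y f) m) = act (R_mult H cmp (e b) (single x y f)) m"
        using act_mult[OF e_carr single_carr[OF f] m] by simp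
      also have "\<dots> = (if b = y then act (single x y f) m else \<zero>\<^bsub>M\<^esub>)"
        using single_mult_e[OF f] e_other[OF _ f, of b] act_zero_r[OF m] by auto
      also have "\<dots> = (if b = y then pact x y f (act (e x) m) else \<zero>\<^bsub>PM b\<^esub>)"
        using act_mult[OF single_carr[OF f] e_carr[of x] m] e_mult_single[OF f] by (simp add: pact_def)
      finally show "act (e b) (act (single x y f) m) = (if b = y then pact x y f (act (e x) m) else \<zero>\<^bsub>PM b\<^esub>)" .
    qed
  qed
  show ?thesis unfolding R_hom_def
  proof (intro CollectI conjI ballI)
    show "phi \<in> carrier M \<rightarrow>\<^sub>E carrier (hat_module PM)"
      unfolding phi_def hat_carrier_simp restrict_PiE_iff using phi_carr by blast
    fix p q assume p: "p \<in> carrier M" and q: "q \<in> carrier M"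
    show "phi (p \<oplus>\<^bsub>M\<^esub> q) = phi p \<oplus>\<^bsub>hat_module PM\<^esub> phi q"
      unfolding phi_def using p q act_addp[OF e_carr p q] by simp
  next
    fix r p assume r: "r \<in> R_carrier H" and p: "p \<in> carrier M"
    show "phi (act r p) = hat_act H PM pact r (phi p)"
      unfolding phi_def using p act_carr[OF r p] lin[OF r p] by simp
  qed
qed

lemma phi_bij: "bij_betw phi (carrier M) (hat_carrier PM)"
  unfolding bij_betw_def
proof (intro conjI)
  have cinj: "inj_on (\<lambda>p. \<lambda>r\<in>R_carrier H. act r p) (carrier M)"
    and cim: "(\<lambda>p. \<lambda>r\<in>R_carrier H. act r p) ` carrier M = R_hom H (R_self H cmp) (R_mult H cmp) M act"
    using cu unfolding c_unital_def bij_betw_def by auto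
  show "inj_on phi (carrier M)"
  proof (rule inj_onI)
    fix m m' assume m: "m \<in> carrier M" and m': "m' \<in> carrier M" and eq: "phi m = phi m'"
    have ex: "act (e x) m = act (e x) m'" for x
      using fun_cong[OF eq, of x] m m' by (simp add: phi_def)
    have "act r m = act r m'" if r: "r \<in> R_carrier H" for r
    proof (rule R_induct[where Fa = "\<lambda>r. act r m" and Fb = "\<lambda>r. act r m'"
        and pl = "\<lambda>a b. a \<oplus>\<^bsub>M\<^esub> b", OF _ _ _ r])
      fix r s assume "r \<in> R_carrier H" "s \<in> R_carrier H"
      then show "act (R_add H r s) m = act r m \<oplus>\<^bsub>M\<^esub> act s m"
        "act (R_add H r s) m' = act r m' \<oplus>\<^bsub>M\<^esub> act s m'" using act_addr m m' by auto
    next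
      fix x y f assume f: "f \<in> carrier (H x y)"
      have "act (single x y f) m = act (single x y f) (act (e x) m)"
        using act_mult[OF single_carr[OF f] e_carr[of x] m] e_mult_single[OF f] by simp
      also have "\<dots> = act (single x y f) (act (e x) m')" using ex by simp
      also have "\<dots> = act (single x y f) m'"
        using act_mult[OF single_carr[OF f] e_carr[of x] m'] e_mult_single[OF f] by simp
      finally show "act (single x y f) m = act (single x y f) m'" .
    qed
    then have "(\<lambda>r\<in>R_carrier H. act r m) = (\<lambda>r\<in>R_carrier H. act r m')"
      by (intro restrict_ext) auto
    then show "m = m'" using inj_onD[OF cinj _ m m'] by simp
  qed
  show "phi ` carrier M = hat_carrier PM"
  proof (intro equalityI subsetI)
    fix v assume "v \<in> phi ` carrier M"
    then show "v \<in> hat_carrier PM" using phi_carr by (auto simp: phi_def)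
  next
    fix u assume u: "u \<in> hat_carrier PM"
    interpret Ma: abelian_monoid M by (rule Mam)
    have ux: "u x \<in> carrier (PM x)" for x using hat_carrierD[OF u] .
    have uM: "u x \<in> carrier M" for x using PM_sub[OF ux] .
    have zo: "act r (u x) = \<zero>\<^bsub>M\<^esub>" if r: "r \<in> R_carrier H" and x: "x \<notin> fst ` supp r" for r x
    proof -
      have "act r (u x) = act r (act (e x) (u x))" using e_fix[OF ux] by simp
      also have "\<dots> = act (R_mult H cmp r (e x)) (u x)" using act_mult[OF r e_carr uM] by simp
      also have "\<dots> = \<zero>\<^bsub>M\<^esub>" using mult_e_zero[OF r x] act_zero_r[OF uM] by simp
      finally show ?thesis .
    qed
    have fs: "finite (fst ` supp r)" if "r \<in> R_carrier H" for r using Rc_fin[OF that] by blast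
    define \<psi> where "\<psi> = (\<lambda>r\<in>R_carrier H. finsum M (\<lambda>x. act r (u x)) (fst ` supp r))"
    have \<psi>_eq: "\<psi> r = finsum M (\<lambda>x. act r (u x)) F"
      if r: "r \<in> R_carrier H" and F: "finite F" "fst ` supp r \<subseteq> F" for r F
      unfolding \<psi>_def using r
      by (simp, intro Ma.add.finprod_mono_neutral_cong_left) (use F zo act_carr uM in auto)
    have \<psi>_hom: "\<psi> \<in> R_hom H (R_self H cmp) (R_mult H cmp) M act"
      unfolding R_hom_def
    proof (intro CollectI conjI ballI)
      show "\<psi> \<in> carrier (R_self H cmp) \<rightarrow>\<^sub>E carrier M"
        unfolding \<psi>_def R_self_carrier restrict_PiE_iff
        using act_carr uM by (auto intro!: Ma.finsum_closed)
      fix r s assume r: "r \<in> carrier (R_self H cmp)" and s: "s \<in> carrier (R_self H cmp)"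
      then have r: "r \<in> R_carrier H" and s: "s \<in> R_carrier H" by simp_all
      define F where "F = fst ` supp r \<union> fst ` supp s"
      have fF: "finite F" unfolding F_def using fs r s by blast
      have rs: "R_add H r s \<in> R_carrier H" using R_add_carr r s by blast
      have sub: "fst ` supp (R_add H r s) \<subseteq> F"
      proof
        fix x assume "x \<in> fst ` supp (R_add H r s)"
        then obtain y where "R_add H r s x y \<noteq> \<zero>\<^bsub>H x y\<^esub>" unfolding supp_def by auto
        then have "r x y \<noteq> \<zero>\<^bsub>H x y\<^esub> \<or> s x y \<noteq> \<zero>\<^bsub>H x y\<^esub>"
          unfolding R_add_def using r s Rc_comp by fastforce
        then show "x \<in> F" unfolding F_def supp_def by force
      qed
      show "\<psi> (r \<oplus>\<^bsub>R_self H cmp\<^esub> s) = \<psi> r \<oplus>\<^bsub>M\<^esub> \<psi> s"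
        unfolding R_self_add
        apply (subst \<psi>_eq[OF rs fF sub])
        apply (subst \<psi>_eq[OF r fF], use F_def in blast)
        apply (subst \<psi>_eq[OF s fF], use F_def in blast)
        apply (subst Ma.finsum_addf[symmetric])
          apply (use act_carr r s uM in \<open>auto simp: act_addr intro!: Ma.finsum_cong'\<close>)
        done
    next
      fix r s assume r: "r \<in> R_carrier H" and s: "s \<in> carrier (R_self H cmp)"
      then have s: "s \<in> R_carrier H" by simp_all
      have rs: "R_mult H cmp r s \<in> R_carrier H" using R_mult_carr r s by blast
      define F where "F = fst ` supp s \<union> fst ` supp (R_mult H cmp r s)"
      have fF: "finite F" unfolding F_def using fs s rs by blast
      have c: "(\<lambda>x. act s (u x)) \<in> F \<rightarrow> carrier M" using act_carr[OF s] uM by auto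
      have "\<psi> (R_mult H cmp r s) = finsum M (\<lambda>x. act (R_mult H cmp r s) (u x)) F"
        by (rule \<psi>_eq[OF rs fF]) (auto simp: F_def)
      also have "\<dots> = finsum M (\<lambda>x. act r (act s (u x))) F"
        using act_mult[OF r s uM] act_carr[OF r act_carr[OF s uM]] by (intro Ma.finsum_cong') auto
      also have "\<dots> = act r (finsum M (\<lambda>x. act s (u x)) F)"
        by (rule act_finsum[OF r fF c, symmetric])
      also have "\<dots> = act r (\<psi> s)" using \<psi>_eq[OF s fF] F_def by auto
      finally show "\<psi> (R_mult H cmp r s) = act r (\<psi> s)" .
    qed
    then obtain m where m: "m \<in> carrier M" and mpsi: "(\<lambda>r\<in>R_carrier H. act r m) = \<psi>"
      using cim by (metis (no_types, lifting) imageE)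
    have "phi m = u"
    proof
      fix x
      have "act (e x) m = \<psi> (e x)" using fun_cong[OF mpsi, of "e x"] e_carr by simp
      also have "\<dots> = finsum M (\<lambda>x'. act (e x) (u x')) {x}"
        by (rule \<psi>_eq[OF e_carr]) (auto simp: supp_def e_def single_def split: if_splits)
      also have "\<dots> = act (e x) (u x)" by (rule finsum_single[where f="\<lambda>x'. act (e x) (u x')" and a=x, OF Mam act_carr[OF e_carr uM]])
      also have "\<dots> = u x" by (rule e_fix[OF ux])
      finally show "phi m x = u x" using m by (simp add: phi_def)
    qed
    then show "u \<in> phi ` carrier M" using m by blast
  qed
qed

end

theorem proposition6p6:
  fixes H :: "'o \<Rightarrow> 'o \<Rightarrow> 'm ring"
    and cmp :: "'o \<Rightarrow> 'o \<Rightarrow> 'o \<Rightarrow> 'm \<Rightarrow> 'm \<Rightarrow> 'm"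
    and idn :: "'o \<Rightarrow> 'm"
  assumes "preadditive_cat H cmp idn"
  shows
    "(\<forall>(PM :: 'o \<Rightarrow> 'v ring) pact. E_module H cmp idn PM pact \<longrightarrow>
        R_module H cmp (hat_module PM) (hat_act H PM pact) \<and>
        c_unital H cmp (hat_module PM) (hat_act H PM pact)) \<and>
     (\<forall>(PM :: 'o \<Rightarrow> 'v ring) pact (QM :: 'o \<Rightarrow> 'w ring) qact.
        E_module H cmp idn PM pact \<longrightarrow> E_module H cmp idn QM qact \<longrightarrow>
        bij_betw (hat_hom PM) (E_hom H PM pact QM qact)
          (R_hom H (hat_module PM) (hat_act H PM pact) (hat_module QM) (hat_act H QM qact))) \<and>
     (\<forall>(M :: 'p ring) act. R_module H cmp M act \<and> c_unital H cmp M act \<longrightarrow>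
        (\<exists>(PM :: 'o \<Rightarrow> 'p ring) pact \<phi>. E_module H cmp idn PM pact \<and>
           \<phi> \<in> R_hom H M act (hat_module PM) (hat_act H PM pact) \<and>
           bij_betw \<phi> (carrier M) (hat_carrier PM)))"
proof -
  interpret pcat H cmp idn by unfold_locales (rule assms)
  show ?thesis
  proof (intro conjI)
    show "\<forall>(PM :: 'o \<Rightarrow> 'v ring) pact. E_module H cmp idn PM pact \<longrightarrow>
        R_module H cmp (hat_module PM) (hat_act H PM pact) \<and>
        c_unital H cmp (hat_module PM) (hat_act H PM pact)"
    proof (intro allI impI)
      fix PM :: "'o \<Rightarrow> 'v ring" and pact
      assume "E_module H cmp idn PM pact"
      then interpret P: emod H cmp idn PM pact by unfold_locales
      show "R_module H cmp (hat_module PM) (hat_act H PM pact) \<and> c_unital H cmp (hat_module PM) (hat_act H PM pact)"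
        using P.hat_R_module P.hat_c_unital by blast
    qed
    show "\<forall>(PM :: 'o \<Rightarrow> 'v ring) pact (QM :: 'o \<Rightarrow> 'w ring) qact.
        E_module H cmp idn PM pact \<longrightarrow> E_module H cmp idn QM qact \<longrightarrow>
        bij_betw (hat_hom PM) (E_hom H PM pact QM qact)
          (R_hom H (hat_module PM) (hat_act H PM pact) (hat_module QM) (hat_act H QM qact))"
      using part2 by blast
    show "\<forall>(M :: 'p ring) act. R_module H cmp M act \<and> c_unital H cmp M act \<longrightarrow>
        (\<exists>(PM :: 'o \<Rightarrow> 'p ring) pact \<phi>. E_module H cmp idn PM pact \<and>
           \<phi> \<in> R_hom H M act (hat_module PM) (hat_act H PM pact) \<and>
           bij_betw \<phi> (carrier M) (hat_carrier PM))"
    proof (intro allI impI)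
      fix M :: "'p ring" and act
      assume "R_module H cmp M act \<and> c_unital H cmp M act"
      then interpret R: rmod H cmp idn M act by unfold_locales auto
      show "\<exists>(PM :: 'o \<Rightarrow> 'p ring) pact \<phi>. E_module H cmp idn PM pact \<and>
           \<phi> \<in> R_hom H M act (hat_module PM) (hat_act H PM pact) \<and>
           bij_betw \<phi> (carrier M) (hat_carrier PM)"
        using R.PM_E_module R.phi_hom R.phi_bij by blast
    qed
  qed
qed

end
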